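(* Let $n\ge1$, $t_1<\dots<t_{n+1}$, and for $\lambda>0$ let $\mathbf{H}(\lambda)=(\mathbf{I}+\lambda\mathbf{C}(2,n+2))^{-1}$. Then (1) $\lim_{\lambda\to0^+}\mathbf{H}(\lambda)=\mathbf{I}_{n+1}$; that is, as $\lambda\to0$ the minimizer of $\lambda(u_1,\boldsymbol{p}^T,u_{n+1})\mathbf{C}(u_1,\boldsymbol{p}^T,u_{n+1})^T+\|\boldsymbol{p}-\boldsymbol{y}\|^2$ converges to $u_1=u_{n+1}=0$, $\boldsymbol{p}=\boldsymbol{y}$; (2) for every $\boldsymbol{y}\in\mathbb{R}^{n+1}$, $$\lim_{\lambda\to+\infty}\mathbf{H}(\lambda)\boldsymbol{y}=\mathbf{L}(\mathbf{L}^T\mathbf{L})^{-1}\mathbf{L}^T\boldsymbol{y}=\pi_{R(\mathbf{L})}\boldsymbol{y},$$ where $\mathbf{L}$ is the $(n+1)\times2$ matrix with $i$-th row $(1,t_i)$ and $\pi_{R(\mathbf{L})}$ is the orthogonal projection onto its range; this limit, together with $u_1=u_{n+1}=0$, is the minimizer of $\|\boldsymbol{y}-\boldsymbol{p}\|^2$ subject to $\mathbf{C}(u_1,\boldsymbol{p}^T,u_{n+1})^T=0$.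
   Context: $S_3\cap C^2$ is the set of $C^2$ functions on $[t_1,t_{n+1}]$ that are cubic polynomials on each $[t_i,t_{i+1}]$. The natural basis: $\varphi_0\in S_3\cap C^2$ vanishes at all knots with $\varphi_0''(t_1)=1,\varphi_0''(t_{n+1})=0$; for $1\le j\le n+1$, $\varphi_j\in S_3\cap C^2$ has $\varphi_j(t_i)=\delta_{ij}$ and $\varphi_j''(t_1)=\varphi_j''(t_{n+1})=0$; $\varphi_{n+2}\in S_3\cap C^2$ vanishes at all knots with $\varphi_{n+2}''(t_1)=0,\varphi_{n+2}''(t_{n+1})=1$. $\mathbf{C}=[c_{k,l}]_{k,l=1}^{n+3}$ with $c_{k,l}=\int_{t_1}^{t_{n+1}}\varphi_{k-1}''\varphi_{l-1}''\,dt$, and $\mathbf{C}(2,n+2)=[c_{ij}:i,j=2,\dots,n+2]$. *)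

theory Defs
  imports "HOL-Analysis.Analysis" "HOL-Computational_Algebra.Polynomial"
          "Jordan_Normal_Form.Gauss_Jordan_Elimination"
begin

definition S3C2 :: "(nat \<Rightarrow> real) \<Rightarrow> nat \<Rightarrow> (real \<Rightarrow> real) \<Rightarrow> (real \<Rightarrow> real) \<Rightarrow> bool" where
  "S3C2 t n f f2 \<longleftrightarrow>
     (\<forall>i\<in>{1..n}. \<exists>p :: real poly. degree p \<le> 3 \<and> (\<forall>x\<in>{t i..t (Suc i)}. f x = poly p x)) \<and>
     (\<exists>f1. \<forall>x\<in>{t 1..t (n+1)}.
        (f has_real_derivative f1 x) (at x within {t 1..t (n+1)}) \<and>
        (f1 has_real_derivative f2 x) (at x within {t 1..t (n+1)})) \<and>
     continuous_on {t 1..t (n+1)} f2"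

definition basis_phi :: "(nat \<Rightarrow> real) \<Rightarrow> nat \<Rightarrow> nat \<Rightarrow> (real \<Rightarrow> real) \<Rightarrow> (real \<Rightarrow> real) \<Rightarrow> bool" where
  "basis_phi t n j f f2 \<longleftrightarrow> S3C2 t n f f2 \<and>
     (if j = 0 then (\<forall>i\<in>{1..n+1}. f (t i) = 0) \<and> f2 (t 1) = 1 \<and> f2 (t (n+1)) = 0
      else if j \<le> n + 1 then (\<forall>i\<in>{1..n+1}. f (t i) = (if i = j then 1 else 0)) \<and>
                             f2 (t 1) = 0 \<and> f2 (t (n+1)) = 0
      else (\<forall>i\<in>{1..n+1}. f (t i) = 0) \<and> f2 (t 1) = 0 \<and> f2 (t (n+1)) = 1)"

text \<open>Second derivative \<phi>_j'' (uniquely determined on [t 1, t (n+1)]).\<close>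
definition phi2 :: "(nat \<Rightarrow> real) \<Rightarrow> nat \<Rightarrow> nat \<Rightarrow> real \<Rightarrow> real" where
  "phi2 t n j = (SOME f2. \<exists>f. basis_phi t n j f f2)"

definition c_entry :: "(nat \<Rightarrow> real) \<Rightarrow> nat \<Rightarrow> nat \<Rightarrow> nat \<Rightarrow> real" where
  "c_entry t n k l = integral {t 1..t (n+1)} (\<lambda>x. phi2 t n (k - 1) x * phi2 t n (l - 1) x)"

text \<open>The full (n+3)x(n+3) matrix C (0-based JNF indices: entry (i,j) is c_{i+1,j+1}).\<close>
definition Cmat :: "(nat \<Rightarrow> real) \<Rightarrow> nat \<Rightarrow> real mat" where
  "Cmat t n = mat (n+3) (n+3) (\<lambda>(i,j). c_entry t n (i+1) (j+1))"

definition Csub :: "(nat \<Rightarrow> real) \<Rightarrow> nat \<Rightarrow> real mat" where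
  "Csub t n = mat (n+1) (n+1) (\<lambda>(i,j). c_entry t n (i+2) (j+2))"

definition Hmat :: "(nat \<Rightarrow> real) \<Rightarrow> nat \<Rightarrow> real \<Rightarrow> real mat" where
  "Hmat t n lam = the (mat_inverse (1\<^sub>m (n+1) + lam \<cdot>\<^sub>m Csub t n))"

definition Lmat :: "(nat \<Rightarrow> real) \<Rightarrow> nat \<Rightarrow> real mat" where
  "Lmat t n = mat (n+1) 2 (\<lambda>(i,j). if j = 0 then 1 else t (i+1))"

definition wvec :: "nat \<Rightarrow> real \<Rightarrow> real vec \<Rightarrow> real \<Rightarrow> real vec" where
  "wvec n u1 p u2 = vec (n+3) (\<lambda>i. if i = 0 then u1 else if i = n + 2 then u2 else p $ (i - 1))"

end

theory Submission
  imports Defs "Jordan_Normal_Form.Determinant"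
begin


definition Sp :: "(nat \<Rightarrow> real) \<Rightarrow> nat \<Rightarrow> (real \<Rightarrow> real) \<Rightarrow> (real \<Rightarrow> real) \<Rightarrow> (real \<Rightarrow> real) \<Rightarrow> bool" where
  "Sp t n f f1 f2 \<longleftrightarrow>
     (\<forall>i\<in>{1..n}. \<exists>p :: real poly. degree p \<le> 3 \<and> (\<forall>x\<in>{t i..t (Suc i)}. f x = poly p x)) \<and>
     (\<forall>x\<in>{t 1..t (n+1)}.
        (f has_real_derivative f1 x) (at x within {t 1..t (n+1)}) \<and>
        (f1 has_real_derivative f2 x) (at x within {t 1..t (n+1)})) \<and>
     continuous_on {t 1..t (n+1)} f2"

lemma S3C2_Sp: "S3C2 t n f f2 \<longleftrightarrow> (\<exists>f1. Sp t n f f1 f2)"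
  unfolding S3C2_def Sp_def by blast

lemma poly_cubic:
  fixes p :: "real poly"
  assumes "degree p \<le> 3"
  shows "poly p x = coeff p 0 + coeff p 1 * x + coeff p 2 * x^2 + coeff p 3 * x^3"
proof -
  have "poly p x = (\<Sum>i\<le>3. coeff p i * x ^ i)"
    unfolding poly_altdef
    by (rule sum.mono_neutral_left) (use assms in \<open>auto simp: coeff_eq_0 not_le\<close>)
  also have "\<dots> = coeff p 0 + coeff p 1 * x + coeff p 2 * x^2 + coeff p 3 * x^3"
  proof -
    have e: "{..3::nat} = {0,1,2,3}" by auto
    show ?thesis unfolding e by simp
  qed
  finally show ?thesis .
qed

lemma deriv_unique_cl:
  fixes f :: "real \<Rightarrow> real"
  assumes "a < b" "x \<in> {a..b}"
    "(f has_real_derivative D1) (at x within {a..b})"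
    "(f has_real_derivative D2) (at x within {a..b})"
  shows "D1 = D2"
proof -
  have c: "cbox a b = {a..b}" by simp
  have v1: "(f has_vector_derivative D1) (at x within cbox a b)"
    using assms(3) unfolding c has_real_derivative_iff_has_vector_derivative .
  have v2: "(f has_vector_derivative D2) (at x within cbox a b)"
    using assms(4) unfolding c has_real_derivative_iff_has_vector_derivative .
  have x: "x \<in> cbox a b" using assms(2) unfolding c .
  show ?thesis by (rule vector_derivative_unique_within_closed_interval[OF assms(1) x v1 v2])
qed

lemma deriv_transform:
  fixes f g :: "real \<Rightarrow> real"
  assumes "(f has_real_derivative D) (at x within S)" "x \<in> S" "\<And>y. y \<in> S \<Longrightarrow> f y = g y"
  shows "(g has_real_derivative D) (at x within S)"
proof -
  have "(g has_derivative (*) D) (at x within S)"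
    by (rule has_derivative_transform_within[where d=1, OF assms(1)[unfolded has_field_derivative_def]])
       (auto simp: assms(2,3))
  then show ?thesis unfolding has_field_derivative_def .
qed

lemma cubic_rec:
  fixes a b c0 c1 c2 c3 :: real
  assumes ab: "a < b" and qa: "c0 + c1*a + c2*a^2 + c3*a^3 = 0"
    and qb: "c0 + c1*b + c2*b^2 + c3*b^3 = 0"
  shows "c1 + 2*c2*b + 3*c3*b^2 = -2*(c1 + 2*c2*a + 3*c3*a^2) - (2*c2 + 6*c3*a)*(b-a)/2"
    and "2*c2 + 6*c3*b = -2*(2*c2 + 6*c3*a) - 6*(c1 + 2*c2*a + 3*c3*a^2)/(b-a)"
proof -
  have "(b - a) * (c1 + c2*(a+b) + c3*(a^2+a*b+b^2)) =
        (c0 + c1*b + c2*b^2 + c3*b^3) - (c0 + c1*a + c2*a^2 + c3*a^3)"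
    by (simp add: algebra_simps power2_eq_square power3_eq_cube)
  also have "\<dots> = 0" using qa qb by simp
  finally have E: "c1 + c2*(a+b) + c3*(a^2+a*b+b^2) = 0" using ab by simp
  have "(c1 + 2*c2*b + 3*c3*b^2) - (-2*(c1 + 2*c2*a + 3*c3*a^2) - (2*c2 + 6*c3*a)*(b-a)/2)
        = 3 * (c1 + c2*(a+b) + c3*(a^2+a*b+b^2))"
    by (simp add: field_simps power2_eq_square)
  then show "c1 + 2*c2*b + 3*c3*b^2 = -2*(c1 + 2*c2*a + 3*c3*a^2) - (2*c2 + 6*c3*a)*(b-a)/2"
    using E by simp
  have ba: "b - a \<noteq> 0" using ab by simp
  define X where "X = 2*c2 + 6*c3*b + 2*(2*c2 + 6*c3*a)"
  define C where "C = c1 + 2*c2*a + 3*c3*a^2"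
  have "X * (b - a) + 6*C = 6 * (c1 + c2*(a+b) + c3*(a^2+a*b+b^2))"
    unfolding X_def C_def by (simp add: algebra_simps power2_eq_square)
  then have "X * (b - a) = - 6*C" using E by simp
  then have "6*C = - X * (b - a)" by simp
  then have "6*C/(b-a) = - X" using ba by (simp add: divide_eq_eq)
  then show "2*c2 + 6*c3*b = -2*(2*c2 + 6*c3*a) - 6*(c1 + 2*c2*a + 3*c3*a^2)/(b-a)"
    unfolding X_def C_def by linarith
qed

lemma prod_step_pos:
  fixes d M h :: real
  assumes "d * M > 0" "h > 0"
  shows "(-2*d - M*h/2) * (-2*M - 6*d/h) > 0"
proof (cases "d > 0")
  case True
  then have "M > 0" using assms(1) by (metis mult_le_0_iff not_le less_eq_real_def)
  moreover have "M*h/2 > 0" "6*d/h > 0" using True assms(2) \<open>M > 0\<close> by auto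
  ultimately have "-2*d - M*h/2 < 0" "-2*M - 6*d/h < 0" using True by linarith+
  then show ?thesis by (simp add: mult_neg_neg)
next
  case False
  then have d: "d < 0" using assms(1) by (cases "d = 0") auto
  then have "M < 0" using assms(1) by (metis mult_le_0_iff not_le less_eq_real_def)
  moreover have "M*h/2 < 0" "6*d/h < 0" using d assms(2) \<open>M < 0\<close>
    by (auto simp: mult_neg_pos divide_neg_pos)
  ultimately have "-2*d - M*h/2 > 0" "-2*M - 6*d/h > 0" using d by linarith+
  then show ?thesis by simp
qed

locale knots =
  fixes t :: "nat \<Rightarrow> real" and n :: nat
  assumes n1: "n \<ge> 1" and tmono: "\<forall>i\<in>{1..n}. t i < t (Suc i)"
begin

abbreviation "I \<equiv> {t 1..t (n+1)}"

lemma tlt: "1 \<le> i \<Longrightarrow> i < j \<Longrightarrow> j \<le> n+1 \<Longrightarrow> t i < t j"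
proof (induction j)
  case 0 then show ?case by simp
next
  case (Suc j)
  have tj: "t j < t (Suc j)" using tmono Suc.prems by auto
  show ?case
  proof (cases "i = j")
    case True then show ?thesis using tj by simp
  next
    case False
    then have "t i < t j" using Suc by auto
    then show ?thesis using tj by linarith
  qed
qed

lemma tle: "1 \<le> i \<Longrightarrow> i \<le> j \<Longrightarrow> j \<le> n+1 \<Longrightarrow> t i \<le> t j"
  using tlt by (cases "i = j") (auto intro: less_imp_le)

lemma t1_lt: "t 1 < t (n+1)" using tlt n1 by auto

lemma piece_sub: "i \<in> {1..n} \<Longrightarrow> {t i..t (Suc i)} \<subseteq> I"
  using tle by auto

lemma piece_cover: "x \<in> I \<Longrightarrow> \<exists>i\<in>{1..n}. x \<in> {t i..t (Suc i)}"
proof -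
  have "\<forall>x. m \<ge> 1 \<longrightarrow> m \<le> n \<longrightarrow> x \<in> {t 1..t (m+1)} \<longrightarrow> (\<exists>i\<in>{1..m}. x \<in> {t i..t (Suc i)})" for m
  proof (induction m)
    case 0 then show ?case by simp
  next
    case (Suc m)
    show ?case
    proof (intro allI impI)
      fix x assume h: "1 \<le> Suc m" "Suc m \<le> n" "x \<in> {t 1..t (Suc m + 1)}"
      show "\<exists>i\<in>{1..Suc m}. x \<in> {t i..t (Suc i)}"
      proof (cases "m \<ge> 1 \<and> x \<le> t (m+1)")
        case True
        then have "x \<in> {t 1..t (m+1)}" using h by auto
        then obtain i where "i\<in>{1..m}" "x \<in> {t i..t (Suc i)}" using Suc.IH h True by auto
        then show ?thesis by (intro bexI[of _ i]) auto
      next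
        case False
        then have "x \<in> {t (Suc m)..t (Suc (Suc m))}" using h by (cases "m = 0") auto
        then show ?thesis by auto
      qed
    qed
  qed
  moreover assume "x \<in> I"
  ultimately show ?thesis using n1 by auto
qed

lemma piece_derivs:
  assumes S: "Sp t n f f1 f2" and i: "i \<in> {1..n}"
    and q: "\<forall>x\<in>{t i..t (Suc i)}. f x = c0 + c1 * x + c2 * x^2 + c3 * x^3"
    and x: "x \<in> {t i..t (Suc i)}"
  shows "f1 x = c1 + 2*c2*x + 3*c3*x^2 \<and> f2 x = 2*c2 + 6*c3*x"
proof -
  let ?J = "{t i..t (Suc i)}"
  have ab: "t i < t (Suc i)" using tmono i by auto
  have sub: "?J \<subseteq> I" using piece_sub[OF i] .
  have xI: "x \<in> I" using x sub by auto
  have d: "\<And>y. y \<in> ?J \<Longrightarrow> (f has_real_derivative f1 y) (at y within ?J) \<and> (f1 has_real_derivative f2 y) (at y within ?J)"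
  proof -
    fix y assume y: "y \<in> ?J"
    have yI: "y \<in> I" using y sub by auto
    have "(f has_real_derivative f1 y) (at y within I) \<and> (f1 has_real_derivative f2 y) (at y within I)"
      using S yI unfolding Sp_def by blast
    then show "(f has_real_derivative f1 y) (at y within ?J) \<and> (f1 has_real_derivative f2 y) (at y within ?J)"
      using DERIV_subset[OF _ sub] by blast
  qed
  have dq: "((\<lambda>x. c0 + c1 * x + c2 * x^2 + c3 * x^3) has_real_derivative (c1 + 2*c2*y + 3*c3*y^2)) (at y within ?J)" for y
    by (auto intro!: derivative_eq_intros simp: power2_eq_square)
  have f1eq: "f1 y = c1 + 2*c2*y + 3*c3*y^2" if y: "y \<in> ?J" for y
  proof -
    have "((\<lambda>x. c0 + c1 * x + c2 * x^2 + c3 * x^3) has_real_derivative f1 y) (at y within ?J)"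
      using deriv_transform[of f "f1 y" y ?J] d[OF y] y q by auto
    then show ?thesis using deriv_unique_cl[OF ab y _ dq] by blast
  qed
  have dq2: "((\<lambda>y. c1 + 2*c2*y + 3*c3*y^2) has_real_derivative (2*c2 + 6*c3*x)) (at x within ?J)"
    by (auto intro!: derivative_eq_intros simp: power2_eq_square)
  have "((\<lambda>y. c1 + 2*c2*y + 3*c3*y^2) has_real_derivative f2 x) (at x within ?J)"
    using deriv_transform[of f1 "f2 x" x ?J] d[OF x] x f1eq by auto
  then have "f2 x = 2*c2 + 6*c3*x" using deriv_unique_cl[OF ab x _ dq2] by blast
  then show ?thesis using f1eq[OF x] by simp
qed

lemma Sp_piece:
  assumes S: "Sp t n f f1 f2" and i: "i \<in> {1..n}"
  obtains c0 c1 c2 c3 where "\<forall>x\<in>{t i..t (Suc i)}. f x = c0 + c1 * x + c2 * x^2 + c3 * x^3"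
proof -
  obtain p :: "real poly" where "degree p \<le> 3" "\<forall>x\<in>{t i..t (Suc i)}. f x = poly p x"
    using S i unfolding Sp_def by blast
  then show ?thesis using that poly_cubic by metis
qed


lemma homog_step:
  assumes S: "Sp t n f f1 f2" and z: "\<forall>k\<in>{1..n+1}. f (t k) = 0" and i: "i \<in> {1..n}"
  shows "f1 (t (Suc i)) = -2*f1 (t i) - f2 (t i)*(t (Suc i) - t i)/2 \<and>
         f2 (t (Suc i)) = -2*f2 (t i) - 6*f1 (t i)/(t (Suc i) - t i)"
proof -
  obtain c0 c1 c2 c3 where q: "\<forall>x\<in>{t i..t (Suc i)}. f x = c0 + c1 * x + c2 * x^2 + c3 * x^3"
    using Sp_piece[OF S i] by blast
  have ab: "t i < t (Suc i)" using tmono i by auto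
  have a: "t i \<in> {t i..t (Suc i)}" and b: "t (Suc i) \<in> {t i..t (Suc i)}" using ab by auto
  note pa = piece_derivs[OF S i q a] and pb = piece_derivs[OF S i q b]
  have qa: "c0 + c1 * t i + c2 * (t i)^2 + c3 * (t i)^3 = 0" using q a z i by force
  have qb: "c0 + c1 * t (Suc i) + c2 * (t (Suc i))^2 + c3 * (t (Suc i))^3 = 0" using q b z i by force
  show ?thesis using cubic_rec[OF ab qa qb] pa pb by simp
qed

lemma homog_sign:
  assumes S: "Sp t n f f1 f2" and z: "\<forall>k\<in>{1..n+1}. f (t k) = 0"
    and m1: "f2 (t 1) = 0" and d1: "f1 (t 1) \<noteq> 0"
  shows "f2 (t (n+1)) \<noteq> 0"
proof -
  have "2 \<le> k \<longrightarrow> k \<le> n+1 \<longrightarrow> f1 (t k) * f2 (t k) > 0" for k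
  proof (induction k)
    case 0 then show ?case by simp
  next
    case (Suc k)
    show ?case
    proof (intro impI)
      assume h: "2 \<le> Suc k" "Suc k \<le> n + 1"
      have i: "k \<in> {1..n}" using h by auto
      have hpos: "t (Suc k) - t k > 0" using tmono i by auto
      note st = homog_step[OF S z i]
      show "f1 (t (Suc k)) * f2 (t (Suc k)) > 0"
      proof (cases "k = 1")
        case True
        have "f1 (t (Suc k)) * f2 (t (Suc k)) = 12 * (f1 (t 1))^2 / (t (Suc k) - t k)"
          using st m1 True by (simp add: power2_eq_square)
        also have "\<dots> > 0" using d1 hpos by simp
        finally show ?thesis .
      next
        case False
        then have "f1 (t k) * f2 (t k) > 0" using Suc.IH h by auto
        then show ?thesis using st prod_step_pos[OF _ hpos] by simp
      qed
    qed
  qed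
  then have "f1 (t (n+1)) * f2 (t (n+1)) > 0" using n1 by auto
  then show ?thesis by auto
qed

lemma homog_zero:
  assumes S: "Sp t n f f1 f2" and z: "\<forall>k\<in>{1..n+1}. f (t k) = 0"
    and m1: "f2 (t 1) = 0" and m2: "f2 (t (n+1)) = 0"
  shows "\<forall>x\<in>I. f2 x = 0"
proof
  have d1: "f1 (t 1) = 0" using homog_sign[OF S z m1] m2 by blast
  have all0: "1 \<le> k \<longrightarrow> k \<le> n+1 \<longrightarrow> f1 (t k) = 0 \<and> f2 (t k) = 0" for k
  proof (induction k)
    case 0 then show ?case by simp
  next
    case (Suc k)
    show ?case
    proof (intro impI)
      assume h: "1 \<le> Suc k" "Suc k \<le> n + 1"
      show "f1 (t (Suc k)) = 0 \<and> f2 (t (Suc k)) = 0"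
      proof (cases "k = 0")
        case True then show ?thesis using d1 m1 by simp
      next
        case False
        then have i: "k \<in> {1..n}" using h by auto
        have "f1 (t k) = 0 \<and> f2 (t k) = 0" using Suc.IH h False by auto
        then show ?thesis using homog_step[OF S z i] by simp
      qed
    qed
  qed
  fix x assume x: "x \<in> I"
  obtain i where i: "i \<in> {1..n}" and xi: "x \<in> {t i..t (Suc i)}" using piece_cover[OF x] by blast
  obtain c0 c1 c2 c3 where q: "\<forall>x\<in>{t i..t (Suc i)}. f x = c0 + c1 * x + c2 * x^2 + c3 * x^3"
    using Sp_piece[OF S i] by blast
  have ab: "t i < t (Suc i)" using tmono i by auto
  have a: "t i \<in> {t i..t (Suc i)}" and b: "t (Suc i) \<in> {t i..t (Suc i)}" using ab by auto
  have "f2 (t i) = 0" "f2 (t (Suc i)) = 0" using all0[of i] all0[of "Suc i"] i by auto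
  then have e1: "2*c2 + 6*c3*t i = 0" and e2: "2*c2 + 6*c3*t (Suc i) = 0"
    using piece_derivs[OF S i q a] piece_derivs[OF S i q b] by auto
  have "6*(c3 * (t (Suc i) - t i)) = (2*c2 + 6*c3*t (Suc i)) - (2*c2 + 6*c3*t i)"
    by (simp add: algebra_simps)
  then have "c3 * (t (Suc i) - t i) = 0" using e1 e2 by simp
  moreover have "t (Suc i) - t i \<noteq> 0" using ab by simp
  ultimately have c3: "c3 = 0" by simp
  then have "c2 = 0" using e1 by simp
  then show "f2 x = 0" using piece_derivs[OF S i q xi] c3 by simp
qed

end


lemma tp_deriv:
  fixes k :: nat and u :: real assumes k: "k \<ge> 2"
  shows "((\<lambda>u::real. (max u 0)^k) has_real_derivative (real k * (max u 0)^(k-1))) (at u)"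
proof (cases "u > 0")
  case True
  have "((\<lambda>u::real. u^k) has_real_derivative (real k * u^(k-1))) (at u)"
    using DERIV_pow[of k u] by simp
  then have "((\<lambda>u::real. (max u 0)^k) has_real_derivative (real k * u^(k-1))) (at u)"
    by (rule has_field_derivative_transform_within_open[where S="{0<..}"]) (use True in auto)
  then show ?thesis using True by simp
next
  case False
  show ?thesis
  proof (cases "u < 0")
    case True
    have "((\<lambda>u::real. 0) has_real_derivative 0) (at u)" by simp
    then have "((\<lambda>u::real. (max u 0)^k) has_real_derivative 0) (at u)"
      by (rule has_field_derivative_transform_within_open[where S="{..<0}"]) (use True k in auto)
    then show ?thesis using True k by (simp add: power_0_left)
  next
    case False
    then have u: "u = 0" using \<open>\<not> 0 < u\<close> by simp
    have lim: "((\<lambda>y. ((max y 0)^k - (max 0 0)^k) / (y - 0)) \<longlongrightarrow> 0) (at (0::real))"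
    proof (rule Lim_null_comparison)
      show "\<forall>\<^sub>F y in at 0. norm (((max y 0)^k - (max 0 0)^k) / (y - 0)) \<le> \<bar>y\<bar>^(k-1)"
      proof (rule always_eventually, intro allI)
        fix y :: real
        have "norm (((max y 0)^k - (max 0 0)^k) / (y - 0)) = \<bar>max y 0\<bar>^k / \<bar>y\<bar>"
          using k by (simp add: power_abs abs_divide)
        also have "\<dots> \<le> \<bar>y\<bar>^k / \<bar>y\<bar>" by (intro divide_right_mono power_mono) auto
        also have "\<dots> \<le> \<bar>y\<bar>^(k-1)"
        proof (cases "y = 0")
          case True then show ?thesis by simp
        next
          case False
          have "\<bar>y\<bar>^k = \<bar>y\<bar>^(k-1) * \<bar>y\<bar>" using power_minus_mult[of k "\<bar>y\<bar>"] k by simp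
          then show ?thesis using False by simp
        qed
        finally show "norm (((max y 0)^k - (max 0 0)^k) / (y - 0)) \<le> \<bar>y\<bar>^(k-1)" .
      qed
      have z: "\<bar>0::real\<bar>^(k-1) = 0" using k by (simp add: power_0_left)
      have "((\<lambda>y::real. \<bar>y\<bar>^(k-1)) \<longlongrightarrow> \<bar>0\<bar>^(k-1)) (at 0)" by (intro tendsto_intros)
      then show "((\<lambda>y::real. \<bar>y\<bar>^(k-1)) \<longlongrightarrow> 0) (at 0)" unfolding z .
    qed
    then have "((\<lambda>u::real. (max u 0)^k) has_real_derivative 0) (at 0)"
      using has_field_derivative_iff by blast
    then show ?thesis using u k by (simp add: power_0_left)
  qed
qed

lemma tp3: "((\<lambda>x::real. (max (x - c) 0)^3) has_real_derivative 3 * (max (x - c) 0)^2) (at x)"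
proof -
  have a: "((\<lambda>u. (max u 0)^3) has_real_derivative (real 3 * (max (x-c) 0)^(3-1))) (at (x - c))"
    by (rule tp_deriv) simp
  have b: "((\<lambda>x::real. x - c) has_real_derivative 1) (at x)"
    by (auto intro!: derivative_eq_intros)
  have "((\<lambda>x. (max (x - c) 0)^3) has_real_derivative real 3 * (max (x-c) 0)^(3-1) * 1) (at x)"
    using DERIV_chain2[OF a b] by simp
  then show ?thesis by simp
qed

lemma tp2: "((\<lambda>x::real. 3 * (max (x - c) 0)^2) has_real_derivative 6 * max (x - c) 0) (at x)"
proof -
  have a: "((\<lambda>u. (max u 0)^2) has_real_derivative (real 2 * (max (x-c) 0)^(2-1))) (at (x - c))"
    by (rule tp_deriv) simp
  have b: "((\<lambda>x::real. x - c) has_real_derivative 1) (at x)"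
    by (auto intro!: derivative_eq_intros)
  have "((\<lambda>x. (max (x - c) 0)^2) has_real_derivative real 2 * (max (x-c) 0)^(2-1) * 1) (at x)"
    using DERIV_chain2[OF a b] by simp
  then have "((\<lambda>x. (max (x - c) 0)^2) has_real_derivative 2 * max (x-c) 0) (at x)" by simp
  from DERIV_cmult[OF this, of 3] show ?thesis by simp
qed

lemma poly_lin: "poly [:- c, 1:] x = x - (c::real)" by simp

lemma deg_lin_pow: "degree ([:- c, 1::real:]^k) \<le> k"
proof -
  have "degree ([:- c, 1::real:]^k) \<le> degree [:- c, 1::real:] * k" by (rule degree_power_le)
  then show ?thesis by simp
qed

context knots
begin

definition sA :: "real \<Rightarrow> real \<Rightarrow> real \<Rightarrow> (nat \<Rightarrow> real) \<Rightarrow> real \<Rightarrow> real" where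
  "sA A B M e x = A + B*(x - t 1) + M/2*(x - t 1)^2 + (\<Sum>j=1..n. e j * (max (x - t j) 0)^3)"
definition sA1 :: "real \<Rightarrow> real \<Rightarrow> real \<Rightarrow> (nat \<Rightarrow> real) \<Rightarrow> real \<Rightarrow> real" where
  "sA1 A B M e x = B + M*(x - t 1) + (\<Sum>j=1..n. e j * (3 * (max (x - t j) 0)^2))"
definition sA2 :: "real \<Rightarrow> real \<Rightarrow> real \<Rightarrow> (nat \<Rightarrow> real) \<Rightarrow> real \<Rightarrow> real" where
  "sA2 A B M e x = M + (\<Sum>j=1..n. e j * (6 * max (x - t j) 0))"

lemma sA_deriv: "(sA A B M e has_real_derivative sA1 A B M e x) (at x)"
proof -
  have h1: "((\<lambda>x. A + B*(x - t 1) + M/2*(x - t 1)^2) has_real_derivative B + M*(x - t 1)) (at x)"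
    by (auto intro!: derivative_eq_intros simp: field_simps)
  have h2: "((\<lambda>x. \<Sum>j=1..n. e j * (max (x - t j) 0)^3) has_real_derivative
             (\<Sum>j=1..n. e j * (3 * (max (x - t j) 0)^2))) (at x)"
    by (rule DERIV_sum) (rule DERIV_cmult, rule tp3)
  show ?thesis unfolding sA_def[abs_def] sA1_def using DERIV_add[OF h1 h2] by simp
qed

lemma sA1_deriv: "(sA1 A B M e has_real_derivative sA2 A B M e x) (at x)"
proof -
  have h1: "((\<lambda>x. B + M*(x - t 1)) has_real_derivative M) (at x)"
    by (auto intro!: derivative_eq_intros)
  have h2: "((\<lambda>x. \<Sum>j=1..n. e j * (3 * (max (x - t j) 0)^2)) has_real_derivative
             (\<Sum>j=1..n. e j * (6 * max (x - t j) 0))) (at x)"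
    by (rule DERIV_sum) (rule DERIV_cmult, rule tp2)
  show ?thesis unfolding sA1_def[abs_def] sA2_def using DERIV_add[OF h1 h2] by simp
qed

lemma sA2_cont: "continuous_on S (sA2 A B M e)"
  unfolding sA2_def[abs_def] by (intro continuous_intros)

lemma max_piece:
  assumes i: "i \<in> {1..n}" and x: "x \<in> {t i..t (Suc i)}" and j: "j \<in> {1..n}"
  shows "max (x - t j) 0 = (if j \<le> i then x - t j else 0)"
proof (cases "j \<le> i")
  case True
  then have "t j \<le> t i" using tle i j by auto
  then show ?thesis using True x by auto
next
  case False
  then have "t (Suc i) \<le> t j" using tle i j by auto
  then show ?thesis using False x by auto
qed

lemma sA_piece:
  assumes i: "i \<in> {1..n}" and x: "x \<in> {t i..t (Suc i)}"
  shows "sA A B M e x = A + B*(x - t 1) + M/2*(x - t 1)^2 + (\<Sum>j=1..i. e j * (x - t j)^3)"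
proof -
  have "(\<Sum>j=1..n. e j * (max (x - t j) 0)^3) = (\<Sum>j=1..n. (if j \<le> i then e j * (x - t j)^3 else 0))"
    by (rule sum.cong) (auto simp: max_piece[OF i x])
  also have "\<dots> = (\<Sum>j=1..i. e j * (x - t j)^3)"
    by (rule sum.mono_neutral_cong_right) (use i in auto)
  finally show ?thesis unfolding sA_def by simp
qed

lemma sA_poly:
  assumes i: "i \<in> {1..n}"
  shows "\<exists>p :: real poly. degree p \<le> 3 \<and> (\<forall>x\<in>{t i..t (Suc i)}. sA A B M e x = poly p x)"
proof -
  define p where "p = [:A:] + Polynomial.smult B [:- t 1, 1:] + Polynomial.smult (M/2) ([:- t 1, 1:]^2)
     + (\<Sum>j=1..i. Polynomial.smult (e j) ([:- t j, 1:]^3))"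
  have d1: "degree ([:A:] + Polynomial.smult B [:- t 1, 1:]) \<le> 3"
    by (rule degree_add_le) (auto intro: order.trans[OF degree_smult_le])
  have d2: "degree (Polynomial.smult (M/2) ([:- t 1, 1:]^2)) \<le> 3"
    by (rule order.trans[OF degree_smult_le]) (rule order.trans[OF deg_lin_pow], simp)
  have d3: "degree (\<Sum>j=1..i. Polynomial.smult (e j) ([:- t j, 1:]^3)) \<le> 3"
    by (rule degree_sum_le) (auto intro: order.trans[OF degree_smult_le] deg_lin_pow)
  have "degree p \<le> 3" unfolding p_def by (rule degree_add_le[OF degree_add_le[OF d1 d2] d3])
  moreover have "\<forall>x\<in>{t i..t (Suc i)}. sA A B M e x = poly p x"
  proof
    fix x assume x: "x \<in> {t i..t (Suc i)}"
    show "sA A B M e x = poly p x"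
      unfolding sA_piece[OF i x] p_def by (simp add: poly_sum algebra_simps)
  qed
  ultimately show ?thesis by blast
qed

lemma sA_Sp: "Sp t n (sA A B M e) (sA1 A B M e) (sA2 A B M e)"
  unfolding Sp_def
  using sA_poly sA_deriv sA1_deriv sA2_cont
  by (auto intro: has_field_derivative_at_within)

lemma sA_tm:
  assumes m: "m \<in> {1..n+1}"
  shows "sA A B M e (t m) = A + B*(t m - t 1) + M/2*(t m - t 1)^2 + (\<Sum>j\<in>{1..<m}. e j * (t m - t j)^3)"
proof -
  have mx: "max (t m - t j) 0 = (if j < m then t m - t j else 0)" if j: "j \<in> {1..n}" for j
  proof (cases "j < m")
    case True
    then have "t j \<le> t m" using tle j m by auto
    then show ?thesis using True by auto
  next
    case False
    then have "t m \<le> t j" using tle j m by auto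
    then show ?thesis using False by auto
  qed
  have "(\<Sum>j=1..n. e j * (max (t m - t j) 0)^3) = (\<Sum>j=1..n. (if j < m then e j * (t m - t j)^3 else 0))"
    by (rule sum.cong) (auto simp: mx)
  also have "\<dots> = (\<Sum>j\<in>{1..<m}. e j * (t m - t j)^3)"
    by (rule sum.mono_neutral_cong_right) (use m in auto)
  finally show ?thesis unfolding sA_def by simp
qed

lemma sA_t1: "sA A B M e (t 1) = A"
  using sA_tm[of 1] by simp

lemma sA1_t1: "sA1 A B M e (t 1) = B"
proof -
  have "(\<Sum>j=1..n. e j * (3 * (max (t 1 - t j) 0)^2)) = 0"
    by (rule sum.neutral) (use tle in auto)
  then show ?thesis unfolding sA1_def by simp
qed

lemma sA2_t1: "sA2 A B M e (t 1) = M"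
proof -
  have "(\<Sum>j=1..n. e j * (6 * max (t 1 - t j) 0)) = 0"
    by (rule sum.neutral) (use tle in auto)
  then show ?thesis unfolding sA2_def by simp
qed

end


context knots
begin

lemma interp: "\<exists>e. \<forall>m\<in>{2..n+1}. sA A B M e (t m) = y m"
proof -
  have "k \<le> n \<Longrightarrow> \<exists>e. \<forall>m\<in>{2..k+1}. sA A B M e (t m) = y m" for k
  proof (induction k)
    case 0 then show ?case by auto
  next
    case (Suc k)
    then obtain e where e: "\<forall>m\<in>{2..k+1}. sA A B M e (t m) = y m" by auto
    define m0 where "m0 = Suc (Suc k)"
    define base where "base = A + B*(t m0 - t 1) + M/2*(t m0 - t 1)^2 + (\<Sum>j\<in>{1..<Suc k}. e j * (t m0 - t j)^3)"
    define v where "v = (y m0 - base) / (t m0 - t (Suc k))^3"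
    define e' where "e' = e(Suc k := v)"
    have hpos: "t (Suc k) < t m0" unfolding m0_def using tlt Suc.prems by auto
    have m0r: "m0 \<in> {1..n+1}" unfolding m0_def using Suc.prems by auto
    show ?case
    proof (intro exI ballI)
      fix m assume m: "m \<in> {2..Suc k + 1}"
      show "sA A B M e' (t m) = y m"
      proof (cases "m = m0")
        case True
        have s1: "(\<Sum>j\<in>{1..<m0}. e' j * (t m0 - t j)^3) =
              (\<Sum>j\<in>{1..<Suc k}. e' j * (t m0 - t j)^3) + e' (Suc k) * (t m0 - t (Suc k))^3"
          unfolding m0_def by (rule sum.atLeastLessThan_Suc) simp
        have s2: "(\<Sum>j\<in>{1..<Suc k}. e' j * (t m0 - t j)^3) = (\<Sum>j\<in>{1..<Suc k}. e j * (t m0 - t j)^3)"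
          by (rule sum.cong) (auto simp: e'_def)
        have nz: "(t m0 - t (Suc k))^3 \<noteq> 0" using hpos by simp
        have "sA A B M e' (t m0) = base + v * (t m0 - t (Suc k))^3"
          unfolding sA_tm[OF m0r] s1 s2 base_def by (simp add: e'_def)
        also have "\<dots> = y m0" unfolding v_def using nz by simp
        finally show ?thesis using True by simp
      next
        case False
        then have m': "m \<in> {2..k+1}" using m unfolding m0_def by auto
        have mr: "m \<in> {1..n+1}" using m' Suc.prems by auto
        have "(\<Sum>j\<in>{1..<m}. e' j * (t m - t j)^3) = (\<Sum>j\<in>{1..<m}. e j * (t m - t j)^3)"
          by (rule sum.cong) (use m' in \<open>auto simp: e'_def\<close>)
        then have "sA A B M e' (t m) = sA A B M e (t m)" unfolding sA_tm[OF mr] by simp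
        then show ?thesis using e m' by simp
      qed
    qed
  qed
  from this[of n] show ?thesis by simp
qed

lemma sA_lin: "sA (A1 + c*A2) (B1 + c*B2) (M1 + c*M2) (\<lambda>j. e1 j + c * e2 j) x
   = sA A1 B1 M1 e1 x + c * sA A2 B2 M2 e2 x"
  unfolding sA_def by (simp add: algebra_simps sum.distrib sum_distrib_left)

lemma sA2_lin: "sA2 (A1 + c*A2) (B1 + c*B2) (M1 + c*M2) (\<lambda>j. e1 j + c * e2 j) x
   = sA2 A1 B1 M1 e1 x + c * sA2 A2 B2 M2 e2 x"
  unfolding sA2_def by (simp add: algebra_simps sum.distrib sum_distrib_left)

lemma exists_spline:
  "\<exists>f f1 f2. Sp t n f f1 f2 \<and> (\<forall>i\<in>{1..n+1}. f (t i) = y i) \<and> f2 (t 1) = Ms \<and> f2 (t (n+1)) = Me"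
proof -
  obtain eH where eH: "\<forall>m\<in>{2..n+1}. sA 0 1 0 eH (t m) = 0"
    using interp[of 0 1 0 "\<lambda>_. 0"] by auto
  obtain eP where eP: "\<forall>m\<in>{2..n+1}. sA (y 1) 0 Ms eP (t m) = y m"
    using interp[of "y 1" 0 Ms y] by auto
  have Hz: "\<forall>k\<in>{1..n+1}. sA 0 1 0 eH (t k) = 0"
  proof
    fix k assume k: "k \<in> {1..n+1}"
    show "sA 0 1 0 eH (t k) = 0"
    proof (cases "k = 1")
      case True then show ?thesis using sA_tm[OF k] by simp
    next
      case False then show ?thesis using eH k by auto
    qed
  qed
  have Pz: "\<forall>k\<in>{1..n+1}. sA (y 1) 0 Ms eP (t k) = y k"
  proof
    fix k assume k: "k \<in> {1..n+1}"
    show "sA (y 1) 0 Ms eP (t k) = y k"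
    proof (cases "k = 1")
      case True then show ?thesis using sA_tm[OF k] by simp
    next
      case False then show ?thesis using eP k by auto
    qed
  qed
  have H2: "sA2 0 1 0 eH (t (n+1)) \<noteq> 0"
    by (rule homog_sign[OF sA_Sp Hz]) (simp_all add: sA2_t1 sA1_t1 sA2_t1[unfolded One_nat_def] sA1_t1[unfolded One_nat_def])
  define c where "c = (Me - sA2 (y 1) 0 Ms eP (t (n+1))) / sA2 0 1 0 eH (t (n+1))"
  define A' where "A' = y 1 + c * 0"
  define B' where "B' = 0 + c * 1"
  define M' where "M' = Ms + c * 0"
  define e' where "e' = (\<lambda>j. eP j + c * eH j)"
  have v: "sA A' B' M' e' x = sA (y 1) 0 Ms eP x + c * sA 0 1 0 eH x" for x
    unfolding A'_def B'_def M'_def e'_def by (rule sA_lin)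
  have v2: "sA2 A' B' M' e' x = sA2 (y 1) 0 Ms eP x + c * sA2 0 1 0 eH x" for x
    unfolding A'_def B'_def M'_def e'_def by (rule sA2_lin)
  show ?thesis
  proof (intro exI conjI)
    show "Sp t n (sA A' B' M' e') (sA1 A' B' M' e') (sA2 A' B' M' e')" by (rule sA_Sp)
    show "\<forall>i\<in>{1..n+1}. sA A' B' M' e' (t i) = y i" using v Pz Hz by simp
    show "sA2 A' B' M' e' (t 1) = Ms" by (simp add: sA2_t1 sA2_t1[unfolded One_nat_def] M'_def)
    show "sA2 A' B' M' e' (t (n+1)) = Me" using v2 H2 unfolding c_def by simp
  qed
qed

lemma basis_exists: "\<exists>f f2. basis_phi t n j f f2"
proof -
  define y where "y = (\<lambda>i. if j \<ge> 1 \<and> j \<le> n+1 \<and> i = j then (1::real) else 0)"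
  define Ms where "Ms = (if j = 0 then (1::real) else 0)"
  define Me where "Me = (if j > n + 1 then (1::real) else 0)"
  obtain f f1 f2 where S: "Sp t n f f1 f2" and fy: "\<forall>i\<in>{1..n+1}. f (t i) = y i"
    and f21: "f2 (t 1) = Ms" and f22: "f2 (t (n+1)) = Me"
    using exists_spline by blast
  have "basis_phi t n j f f2"
    unfolding basis_phi_def S3C2_Sp
    using S fy f21 f22 n1 unfolding y_def Ms_def Me_def by auto
  then show ?thesis by blast
qed

end


lemma Sp_add:
  assumes f: "Sp t n f f1 f2" and g: "Sp t n g g1 g2"
  shows "Sp t n (\<lambda>x. c * f x + g x) (\<lambda>x. c * f1 x + g1 x) (\<lambda>x. c * f2 x + g2 x)"
  unfolding Sp_def
proof (intro conjI ballI)
  fix i assume i: "i \<in> {1..n}"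
  obtain p :: "real poly" where p: "degree p \<le> 3" "\<forall>x\<in>{t i..t (Suc i)}. f x = poly p x"
    using f i unfolding Sp_def by blast
  obtain q :: "real poly" where q: "degree q \<le> 3" "\<forall>x\<in>{t i..t (Suc i)}. g x = poly q x"
    using g i unfolding Sp_def by blast
  have "degree (Polynomial.smult c p + q) \<le> 3"
    by (rule degree_add_le[OF order.trans[OF degree_smult_le p(1)] q(1)])
  moreover have "\<forall>x\<in>{t i..t (Suc i)}. c * f x + g x = poly (Polynomial.smult c p + q) x"
    using p q by simp
  ultimately show "\<exists>p :: real poly. degree p \<le> 3 \<and> (\<forall>x\<in>{t i..t (Suc i)}. c * f x + g x = poly p x)"
    by blast
next
  fix x assume x: "x \<in> {t 1..t (n+1)}"
  have df: "(f has_real_derivative f1 x) (at x within {t 1..t (n+1)})"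
    "(f1 has_real_derivative f2 x) (at x within {t 1..t (n+1)})" using f x unfolding Sp_def by auto
  have dg: "(g has_real_derivative g1 x) (at x within {t 1..t (n+1)})"
    "(g1 has_real_derivative g2 x) (at x within {t 1..t (n+1)})" using g x unfolding Sp_def by auto
  show "((\<lambda>x. c * f x + g x) has_real_derivative c * f1 x + g1 x) (at x within {t 1..t (n+1)})"
    by (rule DERIV_add[OF DERIV_cmult[OF df(1)] dg(1)])
  show "((\<lambda>x. c * f1 x + g1 x) has_real_derivative c * f2 x + g2 x) (at x within {t 1..t (n+1)})"
    by (rule DERIV_add[OF DERIV_cmult[OF df(2)] dg(2)])
next
  have "continuous_on {t 1..t (n+1)} f2" "continuous_on {t 1..t (n+1)} g2"
    using f g unfolding Sp_def by auto
  then show "continuous_on {t 1..t (n+1)} (\<lambda>x. c * f2 x + g2 x)"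
    by (intro continuous_intros)
qed

lemma Sp_zero: "Sp t n (\<lambda>x. 0) (\<lambda>x. 0) (\<lambda>x. 0)"
  unfolding Sp_def by (auto intro!: exI[of _ 0])

lemma Sp_lin: "Sp t n (\<lambda>x. a + b * x) (\<lambda>x. b) (\<lambda>x. 0)"
  unfolding Sp_def
proof (intro conjI ballI)
  fix i
  show "\<exists>p :: real poly. degree p \<le> 3 \<and> (\<forall>x\<in>{t i..t (Suc i)}. a + b * x = poly p x)"
    by (intro exI[of _ "[:a, b:]"]) auto
next
  fix x
  show "((\<lambda>x. a + b * x) has_real_derivative b) (at x within {t 1..t (n+1)})"
    by (auto intro!: derivative_eq_intros)
  show "((\<lambda>x. b) has_real_derivative 0) (at x within {t 1..t (n+1)})"
    by (auto intro!: derivative_eq_intros)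
qed simp

lemma Sp_sum:
  assumes "finite L" "\<forall>l\<in>L. Sp t n (f l) (f1 l) (f2 l)"
  shows "Sp t n (\<lambda>x. \<Sum>l\<in>L. w l * f l x) (\<lambda>x. \<Sum>l\<in>L. w l * f1 l x) (\<lambda>x. \<Sum>l\<in>L. w l * f2 l x)"
  using assms
proof (induction L rule: finite_induct)
  case empty then show ?case using Sp_zero by simp
next
  case (insert a L)
  then have "Sp t n (\<lambda>x. w a * f a x + (\<Sum>l\<in>L. w l * f l x))
      (\<lambda>x. w a * f1 a x + (\<Sum>l\<in>L. w l * f1 l x)) (\<lambda>x. w a * f2 a x + (\<Sum>l\<in>L. w l * f2 l x))"
    by (intro Sp_add) auto
  then show ?case using insert by simp
qed

context knots
begin

definition G :: "nat \<Rightarrow> real \<Rightarrow> real" where "G j = phi2 t n j"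
definition F :: "nat \<Rightarrow> real \<Rightarrow> real" where "F j = (SOME f. basis_phi t n j f (G j))"
definition F1 :: "nat \<Rightarrow> real \<Rightarrow> real" where "F1 j = (SOME f1. Sp t n (F j) f1 (G j))"

lemma basisF: "basis_phi t n j (F j) (G j)"
proof -
  have "\<exists>f. basis_phi t n j f (phi2 t n j)"
    unfolding phi2_def by (rule someI_ex[where P="\<lambda>f2. \<exists>f. basis_phi t n j f f2"]) (use basis_exists in blast)
  then show ?thesis unfolding F_def G_def by (rule someI_ex)
qed

lemma SpF: "Sp t n (F j) (F1 j) (G j)"
proof -
  have "\<exists>f1. Sp t n (F j) f1 (G j)" using basisF unfolding basis_phi_def S3C2_Sp by blast
  then show ?thesis unfolding F1_def by (rule someI_ex)
qed

lemma Fval: "i \<in> {1..n+1} \<Longrightarrow> F j (t i) = (if j = i then 1 else 0)"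
  using basisF[of j] unfolding basis_phi_def by (auto split: if_splits)

lemma G_t1: "G j (t 1) = (if j = 0 then 1 else 0)"
  using basisF[of j] unfolding basis_phi_def by (auto split: if_splits)

lemma G_tn: "j \<le> n + 2 \<Longrightarrow> G j (t (n+1)) = (if j = n + 2 then 1 else 0)"
  using basisF[of j] unfolding basis_phi_def by (cases "j = n + 2") (auto split: if_splits)

lemma G_cont: "continuous_on I (G j)"
  using SpF[of j] unfolding Sp_def by auto

definition Fw :: "(nat \<Rightarrow> real) \<Rightarrow> real \<Rightarrow> real" where "Fw w x = (\<Sum>l<n+3. w l * F l x)"
definition F1w :: "(nat \<Rightarrow> real) \<Rightarrow> real \<Rightarrow> real" where "F1w w x = (\<Sum>l<n+3. w l * F1 l x)"
definition Gw :: "(nat \<Rightarrow> real) \<Rightarrow> real \<Rightarrow> real" where "Gw w x = (\<Sum>l<n+3. w l * G l x)"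

lemma SpFw: "Sp t n (Fw w) (F1w w) (Gw w)"
  unfolding Fw_def[abs_def] F1w_def[abs_def] Gw_def[abs_def]
  by (rule Sp_sum) (auto simp: SpF)

lemma Gw_cont: "continuous_on I (Gw w)"
  using SpFw[of w] unfolding Sp_def by auto

lemma Fw_t: "i \<in> {1..n+1} \<Longrightarrow> Fw w (t i) = w i"
proof -
  assume i: "i \<in> {1..n+1}"
  have "Fw w (t i) = (\<Sum>l<n+3. if l = i then w l else 0)"
    unfolding Fw_def by (rule sum.cong) (auto simp: Fval[OF i])
  also have "\<dots> = w i" using i by (simp add: sum.delta')
  finally show ?thesis .
qed

lemma Gw_t1: "Gw w (t 1) = w 0"
proof -
  have "Gw w (t 1) = (\<Sum>l<n+3. if l = 0 then w l else 0)"
    unfolding Gw_def by (rule sum.cong) (use G_t1 in auto)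
  also have "\<dots> = w 0" by (simp add: sum.delta')
  finally show ?thesis .
qed

lemma Gw_tn: "Gw w (t (n+1)) = w (n+2)"
proof -
  have "Gw w (t (n+1)) = (\<Sum>l<n+3. if l = n+2 then w l else 0)"
    unfolding Gw_def by (rule sum.cong) (use G_tn in auto)
  also have "\<dots> = w (n+2)" by (simp add: sum.delta')
  finally show ?thesis .
qed

lemma zero_G:
  assumes z: "\<forall>x\<in>I. Gw w x = 0"
  shows "w 0 = 0 \<and> w (n+2) = 0 \<and> (\<exists>\<alpha> \<beta>. \<forall>i\<in>{1..n+1}. w i = \<alpha> + \<beta> * t i)"
proof -
  have t1I: "t 1 \<in> I" and tnI: "t (n+1) \<in> I" using t1_lt by auto
  have "Gw w (t 1) = 0" "Gw w (t (n+1)) = 0" using z t1I tnI by blast+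
  then have w0: "w 0 = 0" and wn: "w (n+2) = 0" using Gw_t1[of w] Gw_tn[of w] by simp_all
  note S = SpFw[of w]
  have d1: "(F1w w has_real_derivative 0) (at x within I)" if x: "x \<in> I" for x
    using S x z unfolding Sp_def by force
  obtain c where c: "\<forall>x\<in>I. F1w w x = c"
    using has_field_derivative_zero_constant[of I "F1w w"] d1 by auto
  have d0: "((\<lambda>x. Fw w x - c * x) has_real_derivative 0) (at x within I)" if x: "x \<in> I" for x
  proof -
    have "(Fw w has_real_derivative F1w w x) (at x within I)" using S x unfolding Sp_def by auto
    then have "(Fw w has_real_derivative c) (at x within I)" using c x by simp
    then have "((\<lambda>x. Fw w x - c * x) has_real_derivative c - c * 1) (at x within I)"
      by (intro derivative_intros) auto
    then show ?thesis by simp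
  qed
  obtain a where a: "\<forall>x\<in>I. Fw w x - c * x = a"
    using has_field_derivative_zero_constant[of I "\<lambda>x. Fw w x - c * x"] d0 by auto
  have "\<forall>i\<in>{1..n+1}. w i = a + c * t i"
  proof
    fix i assume i: "i \<in> {1..n+1}"
    have "t i \<in> I" using tle i by auto
    then have "Fw w (t i) - c * t i = a" using a by blast
    then show "w i = a + c * t i" using Fw_t[OF i] by simp
  qed
  then show ?thesis using w0 wn by blast
qed

lemma lin_G:
  assumes w0: "w 0 = 0" and wn: "w (n+2) = 0" and wl: "\<forall>i\<in>{1..n+1}. w i = a + b * t i"
  shows "\<forall>x\<in>I. Gw w x = 0"
proof -
  have S: "Sp t n (\<lambda>x. -1 * (a + b * x) + Fw w x) (\<lambda>x. -1 * b + F1w w x) (\<lambda>x. -1 * 0 + Gw w x)"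
    by (rule Sp_add[OF Sp_lin SpFw])
  have z: "\<forall>k\<in>{1..n+1}. -1 * (a + b * t k) + Fw w (t k) = 0" using wl Fw_t by simp
  have "\<forall>x\<in>I. -1 * 0 + Gw w x = 0"
    by (rule homog_zero[OF S z]) (use Gw_t1[of w] Gw_tn[of w] w0 wn in simp_all)
  then show ?thesis by simp
qed

end


context knots
begin

lemma int_lin:
  fixes a :: "nat \<Rightarrow> real" and g :: "nat \<Rightarrow> real \<Rightarrow> real" and h :: "real \<Rightarrow> real"
  assumes "finite L" "\<forall>l\<in>L. continuous_on I (g l)" "continuous_on I h"
  shows "integral I (\<lambda>x. (\<Sum>l\<in>L. a l * g l x) * h x) = (\<Sum>l\<in>L. a l * integral I (\<lambda>x. g l x * h x))"
proof -
  have eq: "(\<lambda>x. (\<Sum>l\<in>L. a l * g l x) * h x) = (\<lambda>x. \<Sum>l\<in>L. a l * (g l x * h x))"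
    unfolding sum_distrib_right by (simp add: mult.assoc)
  have int: "(\<lambda>x. a l * (g l x * h x)) integrable_on I" if "l \<in> L" for l
    using assms that by (intro integrable_continuous_interval continuous_intros) auto
  have "integral I (\<lambda>x. \<Sum>l\<in>L. a l * (g l x * h x)) = (\<Sum>l\<in>L. integral I (\<lambda>x. a l * (g l x * h x)))"
    by (rule integral_sum[OF assms(1)]) (use int in auto)
  also have "\<dots> = (\<Sum>l\<in>L. a l * integral I (\<lambda>x. g l x * h x))"
    by (rule sum.cong) (simp_all add: integral_mult_right)
  finally show ?thesis unfolding eq .
qed

lemma G_cont'[simp]: "continuous_on {t (Suc 0)..t (Suc n)} (G j)"
  using G_cont[of j] by simp

lemma Gw_cont'[simp]: "continuous_on {t (Suc 0)..t (Suc n)} (Gw w)"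
  using Gw_cont[of w] by simp

lemma Cmat_carrier: "Cmat t n \<in> carrier_mat (n+3) (n+3)"
  unfolding Cmat_def by simp

lemma Csub_carrier: "Csub t n \<in> carrier_mat (n+1) (n+1)"
  unfolding Csub_def by simp

lemma Cmat_idx: "k < n+3 \<Longrightarrow> l < n+3 \<Longrightarrow> Cmat t n $$ (k,l) = integral I (\<lambda>x. G k x * G l x)"
  unfolding Cmat_def c_entry_def G_def by simp

lemma Csub_idx: "i < n+1 \<Longrightarrow> j < n+1 \<Longrightarrow> Csub t n $$ (i,j) = integral I (\<lambda>x. G (Suc i) x * G (Suc j) x)"
  unfolding Csub_def c_entry_def G_def by simp

definition vw :: "real vec \<Rightarrow> nat \<Rightarrow> real" where "vw v l = v $ l"

definition Gs :: "real vec \<Rightarrow> real \<Rightarrow> real" where "Gs p x = (\<Sum>j<n+1. p $ j * G (Suc j) x)"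

lemma Gs_cont: "continuous_on I (Gs p)"
  unfolding Gs_def[abs_def] using G_cont by (intro continuous_intros) auto

lemma Gs_cont'[simp]: "continuous_on {t (Suc 0)..t (Suc n)} (Gs p)"
  using Gs_cont[of p] by simp

lemma Cmat_mv:
  assumes v: "v \<in> carrier_vec (n+3)" and k: "k < n+3"
  shows "(Cmat t n *\<^sub>v v) $ k = integral I (\<lambda>x. Gw (vw v) x * G k x)"
proof -
  have "(Cmat t n *\<^sub>v v) $ k = (\<Sum>i\<in>{0..<n+3}. Cmat t n $$ (k,i) * v $ i)"
    using v k Cmat_carrier by (simp add: scalar_prod_def)
  also have "\<dots> = (\<Sum>i<n+3. v $ i * integral I (\<lambda>x. G i x * G k x))"
    using k by (auto simp: atLeast0LessThan Cmat_idx mult.commute intro!: sum.cong)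
  also have "\<dots> = integral I (\<lambda>x. Gw (vw v) x * G k x)"
    unfolding Gw_def vw_def by (rule int_lin[symmetric]) (auto simp: G_cont)
  finally show ?thesis .
qed

lemma Cmat_quad:
  assumes v: "v \<in> carrier_vec (n+3)"
  shows "scalar_prod v (Cmat t n *\<^sub>v v) = integral I (\<lambda>x. Gw (vw v) x * Gw (vw v) x)"
proof -
  have "scalar_prod v (Cmat t n *\<^sub>v v) = (\<Sum>k\<in>{0..<n+3}. v $ k * (Cmat t n *\<^sub>v v) $ k)"
    using v Cmat_carrier by (simp add: scalar_prod_def)
  also have "\<dots> = (\<Sum>k<n+3. v $ k * integral I (\<lambda>x. G k x * Gw (vw v) x))"
    using v by (auto simp: atLeast0LessThan Cmat_mv mult.commute intro!: sum.cong)
  also have "\<dots> = integral I (\<lambda>x. Gw (vw v) x * Gw (vw v) x)"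
    unfolding Gw_def[of "vw v"] vw_def
    by (rule int_lin[symmetric]) (auto simp: G_cont Gw_cont[unfolded Gw_def[abs_def]] intro!: continuous_intros)
  finally show ?thesis .
qed

lemma Csub_mv:
  assumes p: "p \<in> carrier_vec (n+1)" and i: "i < n+1"
  shows "(Csub t n *\<^sub>v p) $ i = integral I (\<lambda>x. Gs p x * G (Suc i) x)"
proof -
  have "(Csub t n *\<^sub>v p) $ i = (\<Sum>j\<in>{0..<n+1}. Csub t n $$ (i,j) * p $ j)"
    using p i Csub_carrier by (simp add: scalar_prod_def)
  also have "\<dots> = (\<Sum>j<n+1. p $ j * integral I (\<lambda>x. G (Suc j) x * G (Suc i) x))"
    using i by (auto simp: atLeast0LessThan Csub_idx mult.commute intro!: sum.cong)
  also have "\<dots> = integral I (\<lambda>x. Gs p x * G (Suc i) x)"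
    unfolding Gs_def by (rule int_lin[symmetric]) (auto simp: G_cont)
  finally show ?thesis .
qed

lemma Csub_quad:
  assumes p: "p \<in> carrier_vec (n+1)"
  shows "scalar_prod p (Csub t n *\<^sub>v p) = integral I (\<lambda>x. Gs p x * Gs p x)"
proof -
  have "scalar_prod p (Csub t n *\<^sub>v p) = (\<Sum>k\<in>{0..<n+1}. p $ k * (Csub t n *\<^sub>v p) $ k)"
    using p Csub_carrier by (simp add: scalar_prod_def)
  also have "\<dots> = (\<Sum>k<n+1. p $ k * integral I (\<lambda>x. G (Suc k) x * Gs p x))"
    using p by (auto simp: atLeast0LessThan Csub_mv mult.commute intro!: sum.cong)
  also have "\<dots> = integral I (\<lambda>x. Gs p x * Gs p x)"
    unfolding Gs_def[of p]
    by (rule int_lin[symmetric]) (auto simp: G_cont Gs_cont[unfolded Gs_def[abs_def]] intro!: continuous_intros)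
  finally show ?thesis .
qed

definition wf :: "real \<Rightarrow> real vec \<Rightarrow> real \<Rightarrow> nat \<Rightarrow> real" where
  "wf u1 p u2 l = (if l = 0 then u1 else if l = n + 2 then u2 else p $ (l - 1))"

lemma Gw_wf: "Gw (wf u1 p u2) x = u1 * G 0 x + Gs p x + u2 * G (n+2) x"
proof -
  let ?f = "\<lambda>l. wf u1 p u2 l * G l x"
  have e3: "n + 3 = Suc (Suc (Suc n))" by simp
  have "Gw (wf u1 p u2) x = (\<Sum>l<Suc (Suc (Suc n)). ?f l)"
    unfolding Gw_def e3 ..
  also have "\<dots> = (\<Sum>l<Suc (Suc n). ?f l) + ?f (Suc (Suc n))"
    by (rule sum.lessThan_Suc)
  also have "(\<Sum>l<Suc (Suc n). ?f l) = ?f 0 + (\<Sum>j<Suc n. ?f (Suc j))"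
    by (rule sum.lessThan_Suc_shift)
  also have "(\<Sum>j<Suc n. ?f (Suc j)) = (\<Sum>j<n+1. p $ j * G (Suc j) x)"
    by (rule sum.cong) (auto simp: wf_def)
  also have "?f 0 = u1 * G 0 x" by (simp add: wf_def)
  also have "?f (Suc (Suc n)) = u2 * G (n+2) x" by (simp add: wf_def)
  finally show ?thesis unfolding Gs_def by simp
qed

lemma Gw_wvec: "Gw (vw (wvec n u1 p u2)) x = Gw (wf u1 p u2) x"
  unfolding Gw_def vw_def wvec_def wf_def by (rule sum.cong) auto

lemma Gs_eq: "Gs p x = Gw (wf 0 p 0) x"
  using Gw_wf[of 0 p 0 x] by simp

lemma wvec_carrier: "wvec n u1 p u2 \<in> carrier_vec (n+3)"
  unfolding wvec_def by simp

end


lemma sp_self: "(v :: real vec) \<in> carrier_vec m \<Longrightarrow> scalar_prod v v = (\<Sum>i<m. (v $ i)^2)"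
  by (simp add: scalar_prod_def atLeast0LessThan power2_eq_square)

lemma sp_self_nonneg: "(v :: real vec) \<in> carrier_vec m \<Longrightarrow> scalar_prod v v \<ge> 0"
  by (simp add: sp_self sum_nonneg)

lemma sp_self_zero:
  assumes v: "(v :: real vec) \<in> carrier_vec m" and z: "scalar_prod v v = 0"
  shows "v = 0\<^sub>v m"
proof -
  have "(\<Sum>i<m. (v $ i)^2) = 0" using z sp_self[OF v] by simp
  then have "\<forall>i\<in>{..<m}. (v $ i)^2 = 0" by (subst (asm) sum_nonneg_eq_0_iff) auto
  then show ?thesis using v by (intro eq_vecI) auto
qed

lemma sp_entry_le:
  assumes v: "(v :: real vec) \<in> carrier_vec m" and i: "i < m"
  shows "(v $ i)^2 \<le> scalar_prod v v"
proof -
  have "(v $ i)^2 = (\<Sum>j\<in>{i}. (v $ j)^2)" by simp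
  also have "\<dots> \<le> (\<Sum>j<m. (v $ j)^2)" by (rule sum_mono2) (use i in auto)
  finally show ?thesis using sp_self[OF v] by simp
qed

lemma inv_exists:
  fixes A :: "real mat"
  assumes A: "A \<in> carrier_mat m m" and inj: "\<forall>v\<in>carrier_vec m. A *\<^sub>v v = 0\<^sub>v m \<longrightarrow> v = 0\<^sub>v m"
  shows "\<exists>B. mat_inverse A = Some B \<and> A * B = 1\<^sub>m m \<and> B * A = 1\<^sub>m m \<and> B \<in> carrier_mat m m"
proof -
  have "det A \<noteq> 0" using det_0_iff_vec_prod_zero_field[OF A] inj by blast
  then have U: "A \<in> Units (ring_mat TYPE(real) m ())" by (rule det_non_zero_imp_unit[OF A])
  have "mat_inverse A \<noteq> None"
  proof
    assume "mat_inverse A = None"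
    then have "A \<notin> Units (ring_mat TYPE(real) m ())" by (rule mat_inverse(1)[OF A])
    with U show False by simp
  qed
  then obtain B where "mat_inverse A = Some B" by blast
  then show ?thesis using mat_inverse(2)[OF A] by blast
qed

context knots
begin

lemma sq_int_nonneg:
  fixes g :: "real \<Rightarrow> real"
  assumes g: "continuous_on I g"
  shows "integral I (\<lambda>x. g x * g x) \<ge> 0"
  by (rule integral_nonneg) (use g in \<open>auto intro!: integrable_continuous_interval continuous_intros\<close>)

lemma sq_int_zero:
  fixes g :: "real \<Rightarrow> real"
  assumes g: "continuous_on I g" and z: "integral I (\<lambda>x. g x * g x) = 0"
  shows "\<forall>x\<in>I. g x = 0"
proof
  fix x assume x: "x \<in> I"
  have c: "cbox (t 1) (t (n+1)) = I" by simp
  have cont: "continuous_on (cbox (t 1) (t (n+1))) (\<lambda>x. g x * g x)"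
    unfolding c using g by (intro continuous_intros)
  have "(\<lambda>x. g x * g x) integrable_on I" using g by (intro integrable_continuous_interval continuous_intros)
  then have hi: "((\<lambda>x. g x * g x) has_integral 0) (cbox (t 1) (t (n+1)))"
    unfolding c using z integrable_integral by fastforce
  have ne: "box (t 1) (t (n+1)) \<noteq> {}" using t1_lt by simp
  have "g x * g x = 0"
    by (rule has_integral_0_cbox_imp_0[OF cont _ hi ne]) (use x c in auto)
  then show "g x = 0" by simp
qed

lemma Csub_psd: "p \<in> carrier_vec (n+1) \<Longrightarrow> scalar_prod p (Csub t n *\<^sub>v p) \<ge> 0"
  using Csub_quad[of p] sq_int_nonneg[OF Gs_cont[of p]] by simp

lemma wf_lin:
  assumes "\<forall>i\<in>{1..n+1}. wf u1 p u2 i = a + b * t i"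
  shows "\<forall>i<n+1. p $ i = a + b * t (Suc i)"
proof (intro allI impI)
  fix i assume i: "i < n+1"
  have "wf u1 p u2 (Suc i) = a + b * t (Suc i)" using assms i by auto
  then show "p $ i = a + b * t (Suc i)" using i by (simp add: wf_def)
qed

lemma lin_wf:
  assumes "\<forall>i<n+1. p $ i = a + b * t (Suc i)"
  shows "\<forall>i\<in>{1..n+1}. wf u1 p u2 i = a + b * t i"
proof
  fix i assume i: "i \<in> {1..n+1}"
  then obtain j where j: "i = Suc j" "j < n+1" by (cases i) auto
  then show "wf u1 p u2 i = a + b * t i" using assms by (simp add: wf_def)
qed

lemma Csub_zero:
  assumes p: "p \<in> carrier_vec (n+1)" and z: "scalar_prod p (Csub t n *\<^sub>v p) = 0"
  shows "Csub t n *\<^sub>v p = 0\<^sub>v (n+1) \<and> (\<exists>a b. \<forall>i<n+1. p $ i = a + b * t (Suc i))"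
proof -
  have z0: "\<forall>x\<in>I. Gs p x = 0"
    by (rule sq_int_zero[OF Gs_cont]) (use z Csub_quad[OF p] in simp)
  have "Csub t n *\<^sub>v p = 0\<^sub>v (n+1)"
  proof (intro eq_vecI)
    fix i assume "i < dim_vec (0\<^sub>v (n+1) :: real vec)"
    then have i: "i < n+1" by simp
    have "(Csub t n *\<^sub>v p) $ i = integral I (\<lambda>x. Gs p x * G (Suc i) x)" by (rule Csub_mv[OF p i])
    also have "\<dots> = integral I (\<lambda>x. 0)" by (rule integral_cong) (use z0 in simp)
    finally show "(Csub t n *\<^sub>v p) $ i = 0\<^sub>v (n+1) $ i" using i by simp
  qed (use Csub_carrier in simp)
  moreover have "\<forall>x\<in>I. Gw (wf 0 p 0) x = 0" using z0 Gs_eq by simp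
  from zero_G[OF this] obtain a b where "\<forall>i\<in>{1..n+1}. wf 0 p 0 i = a + b * t i" by blast
  then have "\<forall>i<n+1. p $ i = a + b * t (Suc i)" by (rule wf_lin)
  then have "\<exists>a b. \<forall>i<n+1. p $ i = a + b * t (Suc i)" by blast
  ultimately show ?thesis by blast
qed

lemma Csub_lin:
  assumes p: "p \<in> carrier_vec (n+1)" and l: "\<forall>i<n+1. p $ i = a + b * t (Suc i)"
  shows "Csub t n *\<^sub>v p = 0\<^sub>v (n+1)"
proof -
  have "\<forall>x\<in>I. Gw (wf 0 p 0) x = 0"
    by (rule lin_G[where a=a and b=b]) (use lin_wf[OF l] in \<open>simp_all add: wf_def\<close>)
  then have z0: "\<forall>x\<in>I. Gs p x = 0" using Gs_eq by simp
  show ?thesis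
  proof (intro eq_vecI)
    fix i assume "i < dim_vec (0\<^sub>v (n+1) :: real vec)"
    then have i: "i < n+1" by simp
    have "(Csub t n *\<^sub>v p) $ i = integral I (\<lambda>x. Gs p x * G (Suc i) x)" by (rule Csub_mv[OF p i])
    also have "\<dots> = integral I (\<lambda>x. 0)" by (rule integral_cong) (use z0 in simp)
    finally show "(Csub t n *\<^sub>v p) $ i = 0\<^sub>v (n+1) $ i" using i by simp
  qed (use Csub_carrier in simp)
qed

lemma Cmat_zero:
  assumes p: "p \<in> carrier_vec (n+1)" and z: "Cmat t n *\<^sub>v wvec n u1 p u2 = 0\<^sub>v (n+3)"
  shows "u1 = 0 \<and> u2 = 0 \<and> (\<exists>a b. \<forall>i<n+1. p $ i = a + b * t (Suc i))"
proof -
  let ?v = "wvec n u1 p u2"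
  have v: "?v \<in> carrier_vec (n+3)" by (rule wvec_carrier)
  have "integral I (\<lambda>x. Gw (vw ?v) x * Gw (vw ?v) x) = 0"
    using Cmat_quad[OF v] z v by simp
  then have "\<forall>x\<in>I. Gw (vw ?v) x = 0" by (rule sq_int_zero[OF Gw_cont])
  then have "\<forall>x\<in>I. Gw (wf u1 p u2) x = 0" using Gw_wvec by simp
  from zero_G[OF this] obtain a b where ab: "wf u1 p u2 0 = 0" "wf u1 p u2 (n+2) = 0"
    "\<forall>i\<in>{1..n+1}. wf u1 p u2 i = a + b * t i" by blast
  from wf_lin[OF ab(3)] have "\<forall>i<n+1. p $ i = a + b * t (Suc i)" .
  moreover have "u1 = 0" "u2 = 0" using ab(1,2) by (simp_all add: wf_def)
  ultimately show ?thesis by blast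
qed

lemma Cmat_lin:
  assumes p: "p \<in> carrier_vec (n+1)" and l: "\<forall>i<n+1. p $ i = a + b * t (Suc i)"
  shows "Cmat t n *\<^sub>v wvec n 0 p 0 = 0\<^sub>v (n+3)"
proof -
  let ?v = "wvec n 0 p 0"
  have v: "?v \<in> carrier_vec (n+3)" by (rule wvec_carrier)
  have "\<forall>x\<in>I. Gw (wf 0 p 0) x = 0"
    by (rule lin_G[where a=a and b=b]) (use lin_wf[OF l] in \<open>simp_all add: wf_def\<close>)
  then have z0: "\<forall>x\<in>I. Gw (vw ?v) x = 0" using Gw_wvec by simp
  show ?thesis
  proof (intro eq_vecI)
    fix k assume "k < dim_vec (0\<^sub>v (n+3) :: real vec)"
    then have k: "k < n+3" by simp
    have "(Cmat t n *\<^sub>v ?v) $ k = integral I (\<lambda>x. Gw (vw ?v) x * G k x)" by (rule Cmat_mv[OF v k])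
    also have "\<dots> = integral I (\<lambda>x. 0)" by (rule integral_cong) (use z0 in simp)
    finally show "(Cmat t n *\<^sub>v ?v) $ k = 0\<^sub>v (n+3) $ k" using k by simp
  qed (use Cmat_carrier in simp)
qed

end


lemma smult_mat_vec:
  fixes M :: "real mat"
  assumes "M \<in> carrier_mat a b" "v \<in> carrier_vec b"
  shows "(k \<cdot>\<^sub>m M) *\<^sub>v v = k \<cdot>\<^sub>v (M *\<^sub>v v)"
  using assms by (intro eq_vecI) (auto simp: scalar_prod_def sum_distrib_left mult.assoc)

lemma mat_vec_smult:
  fixes M :: "real mat"
  assumes "M \<in> carrier_mat a b" "v \<in> carrier_vec b"
  shows "M *\<^sub>v (k \<cdot>\<^sub>v v) = k \<cdot>\<^sub>v (M *\<^sub>v v)"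
  using assms by (intro eq_vecI) (auto simp: scalar_prod_def sum_distrib_left mult.left_commute)

lemma mat_unit:
  fixes H :: "real mat"
  assumes "H \<in> carrier_mat m m" "i < m" "k < m"
  shows "(H *\<^sub>v unit_vec m k) $ i = H $$ (i,k)"
  using assms by simp

lemma sp_expand:
  fixes x s :: "real vec"
  assumes "x \<in> carrier_vec m" "s \<in> carrier_vec m"
  shows "scalar_prod (x - s) (x - s) = scalar_prod x x - 2 * scalar_prod x s + scalar_prod s s"
proof -
  have "scalar_prod (x - s) (x - s) = scalar_prod x (x - s) - scalar_prod s (x - s)"
    using assms by (simp add: minus_scalar_prod_distrib[of _ m])
  also have "\<dots> = (scalar_prod x x - scalar_prod x s) - (scalar_prod s x - scalar_prod s s)"
    using assms by (simp add: scalar_prod_minus_distrib[of _ m])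
  also have "scalar_prod s x = scalar_prod x s" using assms by (simp add: comm_scalar_prod[of _ m])
  finally show ?thesis by simp
qed

lemma resolvent_bound:
  fixes A H :: "real mat" and s :: "real vec"
  assumes A: "A \<in> carrier_mat m m" and H: "H \<in> carrier_mat m m" and AH: "A * H = 1\<^sub>m m"
    and pos: "\<forall>v\<in>carrier_vec m. scalar_prod v (A *\<^sub>v v) \<ge> scalar_prod v v"
    and s: "s \<in> carrier_vec m"
  shows "scalar_prod (H *\<^sub>v s) (H *\<^sub>v s) \<le> scalar_prod s s"
proof -
  define x where "x = H *\<^sub>v s"
  have x: "x \<in> carrier_vec m" unfolding x_def using H s by simp
  have "A *\<^sub>v x = (A * H) *\<^sub>v s" unfolding x_def using A H s by simp
  then have Ax: "A *\<^sub>v x = s" using AH s by simp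
  have 1: "scalar_prod x x \<le> scalar_prod x s" using pos x Ax by metis
  have "0 \<le> scalar_prod (x - s) (x - s)" by (rule sp_self_nonneg[of _ m]) (use x s in simp)
  then have 2: "2 * scalar_prod x s \<le> scalar_prod x x + scalar_prod s s" using sp_expand[OF x s] by simp
  from 1 2 show ?thesis unfolding x_def[symmetric] by simp
qed

lemma resolvent_entry:
  fixes A H :: "real mat" and s :: "real vec"
  assumes A: "A \<in> carrier_mat m m" and H: "H \<in> carrier_mat m m" and AH: "A * H = 1\<^sub>m m"
    and pos: "\<forall>v\<in>carrier_vec m. scalar_prod v (A *\<^sub>v v) \<ge> scalar_prod v v"
    and s: "s \<in> carrier_vec m" and i: "i < m"
  shows "\<bar>(H *\<^sub>v s) $ i\<bar> \<le> sqrt (scalar_prod s s)"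
proof -
  have "((H *\<^sub>v s) $ i)^2 \<le> scalar_prod (H *\<^sub>v s) (H *\<^sub>v s)"
    by (rule sp_entry_le) (use H s i in simp_all)
  also have "\<dots> \<le> scalar_prod s s" by (rule resolvent_bound[OF A H AH pos s])
  finally show ?thesis by (simp add: real_le_rsqrt)
qed



context knots
begin

lemma Csub_dims: "dim_row (Csub t n) = n+1" "dim_col (Csub t n) = n+1"
  by (simp_all add: Csub_def)

lemma Csub_sym: "transpose_mat (Csub t n) = Csub t n"
  by (rule eq_matI) (auto simp: Csub_dims Csub_idx mult.commute)

lemma Csub_sym_sp:
  assumes u: "u \<in> carrier_vec (n+1)" and v: "v \<in> carrier_vec (n+1)"
  shows "scalar_prod (Csub t n *\<^sub>v u) v = scalar_prod u (Csub t n *\<^sub>v v)"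
  using transpose_vec_mult_scalar[OF Csub_carrier v u] Csub_sym by simp

definition Am :: "real \<Rightarrow> real mat" where "Am lam = 1\<^sub>m (n+1) + lam \<cdot>\<^sub>m Csub t n"

lemma Am_carrier: "Am lam \<in> carrier_mat (n+1) (n+1)"
  unfolding Am_def using Csub_carrier by simp

lemma Am_mv: "v \<in> carrier_vec (n+1) \<Longrightarrow> Am lam *\<^sub>v v = v + lam \<cdot>\<^sub>v (Csub t n *\<^sub>v v)"
  unfolding Am_def using Csub_carrier
  by (subst add_mult_distrib_mat_vec[of _ "n+1" "n+1"]) (auto simp: smult_mat_vec[of _ "n+1" "n+1"])

lemma Am_sp: "v \<in> carrier_vec (n+1) \<Longrightarrow>
   scalar_prod v (Am lam *\<^sub>v v) = scalar_prod v v + lam * scalar_prod v (Csub t n *\<^sub>v v)"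
  using Csub_carrier by (simp add: Am_mv scalar_prod_add_distrib[of _ "n+1"])

lemma Am_pos: "lam \<ge> 0 \<Longrightarrow> \<forall>v\<in>carrier_vec (n+1). scalar_prod v (Am lam *\<^sub>v v) \<ge> scalar_prod v v"
  using Am_sp Csub_psd by simp

lemma H_ex:
  assumes lam: "lam \<ge> 0"
  shows "Am lam * Hmat t n lam = 1\<^sub>m (n+1) \<and> Hmat t n lam * Am lam = 1\<^sub>m (n+1) \<and> Hmat t n lam \<in> carrier_mat (n+1) (n+1)"
proof -
  have inj: "\<forall>v\<in>carrier_vec (n+1). Am lam *\<^sub>v v = 0\<^sub>v (n+1) \<longrightarrow> v = 0\<^sub>v (n+1)"
  proof (intro ballI impI)
    fix v :: "real vec" assume v: "v \<in> carrier_vec (n+1)" and z: "Am lam *\<^sub>v v = 0\<^sub>v (n+1)"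
    have "scalar_prod v v \<le> scalar_prod v (Am lam *\<^sub>v v)" using Am_pos[OF lam] v by blast
    also have "\<dots> = 0" using z v by simp
    finally have "scalar_prod v v = 0" using sp_self_nonneg[OF v] by simp
    then show "v = 0\<^sub>v (n+1)" by (rule sp_self_zero[OF v])
  qed
  obtain B where "mat_inverse (Am lam) = Some B" "Am lam * B = 1\<^sub>m (n+1)" "B * Am lam = 1\<^sub>m (n+1)"
      "B \<in> carrier_mat (n+1) (n+1)"
    using inv_exists[OF Am_carrier inj] by blast
  moreover have "Hmat t n lam = B" using calculation(1) unfolding Hmat_def Am_def[symmetric] by simp
  ultimately show ?thesis by simp
qed

lemma H_entry_eq:
  assumes lam: "lam \<ge> 0" and i: "i < n+1" and j: "j < n+1"
  shows "Hmat t n lam $$ (i,j) + lam * (\<Sum>k<n+1. Hmat t n lam $$ (i,k) * Csub t n $$ (k,j)) = 1\<^sub>m (n+1) $$ (i,j)"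
proof -
  let ?H = "Hmat t n lam"
  have Hc: "?H \<in> carrier_mat (n+1) (n+1)" and HA: "?H * Am lam = 1\<^sub>m (n+1)" using H_ex[OF lam] by auto
  have "(?H * Am lam) $$ (i,j) = scalar_prod (row ?H i) (col (Am lam) j)"
    using Hc Am_carrier[of lam] i j by simp
  also have "\<dots> = (\<Sum>k\<in>{0..<n+1}. ?H $$ (i,k) * Am lam $$ (k,j))"
    unfolding scalar_prod_def
  proof (rule sum.cong)
    show "{0..<dim_vec (col (Am lam) j)} = {0..<n+1}" using Am_carrier[of lam] by simp
  next
    fix k assume "k \<in> {0..<n+1}"
    then show "row ?H i $ k * col (Am lam) j $ k = ?H $$ (i,k) * Am lam $$ (k,j)"
      using Hc Am_carrier[of lam] i j by simp
  qed
  also have "\<dots> = (\<Sum>k<n+1. (if k = j then ?H $$ (i,k) else 0) + lam * (?H $$ (i,k) * Csub t n $$ (k,j)))"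
    unfolding atLeast0LessThan
    by (rule sum.cong) (use j Csub_carrier in \<open>auto simp: Am_def algebra_simps\<close>)
  also have "\<dots> = (\<Sum>k<n+1. (if k = j then ?H $$ (i,k) else 0)) + (\<Sum>k<n+1. lam * (?H $$ (i,k) * Csub t n $$ (k,j)))"
    by (rule sum.distrib)
  also have "(\<Sum>k<n+1. (if k = j then ?H $$ (i,k) else 0)) = ?H $$ (i,j)"
    by (subst sum.delta) (use j in auto)
  also have "(\<Sum>k<n+1. lam * (?H $$ (i,k) * Csub t n $$ (k,j))) = lam * (\<Sum>k<n+1. ?H $$ (i,k) * Csub t n $$ (k,j))"
    by (rule sum_distrib_left[symmetric])
  finally show ?thesis using HA by simp
qed

lemma H_unit_bound:
  assumes lam: "lam \<ge> 0" and i: "i < n+1" and k: "k < n+1"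
  shows "\<bar>Hmat t n lam $$ (i,k)\<bar> \<le> 1"
proof -
  have Hc: "Hmat t n lam \<in> carrier_mat (n+1) (n+1)" and AH: "Am lam * Hmat t n lam = 1\<^sub>m (n+1)"
    using H_ex[OF lam] by auto
  have "\<bar>(Hmat t n lam *\<^sub>v unit_vec (n+1) k) $ i\<bar> \<le> sqrt (scalar_prod (unit_vec (n+1) k) (unit_vec (n+1) k))"
    by (rule resolvent_entry[OF Am_carrier Hc AH Am_pos[OF lam] _ i]) simp
  then show ?thesis using Hc i k by simp
qed

lemma part1:
  assumes i: "i < n+1" and j: "j < n+1"
  shows "((\<lambda>lam. Hmat t n lam $$ (i,j)) \<longlongrightarrow> 1\<^sub>m (n+1) $$ (i,j)) (at_right 0)"
proof -
  define K where "K = (\<Sum>k<n+1. \<bar>Csub t n $$ (k,j)\<bar>)"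
  have bd: "\<bar>Hmat t n lam $$ (i,j) - 1\<^sub>m (n+1) $$ (i,j)\<bar> \<le> lam * K" if lam: "lam > 0" for lam
  proof -
    have "Hmat t n lam $$ (i,j) - 1\<^sub>m (n+1) $$ (i,j) = - (lam * (\<Sum>k<n+1. Hmat t n lam $$ (i,k) * Csub t n $$ (k,j)))"
      using H_entry_eq[of lam i j] lam i j by simp
    then have "\<bar>Hmat t n lam $$ (i,j) - 1\<^sub>m (n+1) $$ (i,j)\<bar> = lam * \<bar>\<Sum>k<n+1. Hmat t n lam $$ (i,k) * Csub t n $$ (k,j)\<bar>"
      using lam by (simp add: abs_mult)
    also have "\<bar>\<Sum>k<n+1. Hmat t n lam $$ (i,k) * Csub t n $$ (k,j)\<bar> \<le> K"
    proof -
      have "\<bar>\<Sum>k<n+1. Hmat t n lam $$ (i,k) * Csub t n $$ (k,j)\<bar> \<le> (\<Sum>k<n+1. \<bar>Hmat t n lam $$ (i,k) * Csub t n $$ (k,j)\<bar>)"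
        by (rule sum_abs)
      also have "\<dots> \<le> K" unfolding K_def
      proof (rule sum_mono)
        fix k assume "k \<in> {..<n+1}"
        then have "\<bar>Hmat t n lam $$ (i,k)\<bar> \<le> 1" using H_unit_bound[of lam i k] lam i by simp
        then show "\<bar>Hmat t n lam $$ (i,k) * Csub t n $$ (k,j)\<bar> \<le> \<bar>Csub t n $$ (k,j)\<bar>"
          by (simp add: abs_mult mult_left_le_one_le)
      qed
      finally show ?thesis .
    qed
    then have "lam * \<bar>\<Sum>k<n+1. Hmat t n lam $$ (i,k) * Csub t n $$ (k,j)\<bar> \<le> lam * K"
      using lam by (simp add: mult_left_mono)
    finally show ?thesis .
  qed
  have "((\<lambda>lam. Hmat t n lam $$ (i,j) - 1\<^sub>m (n+1) $$ (i,j)) \<longlongrightarrow> 0) (at_right 0)"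
  proof (rule Lim_null_comparison)
    show "\<forall>\<^sub>F lam in at_right 0. norm (Hmat t n lam $$ (i,j) - 1\<^sub>m (n+1) $$ (i,j)) \<le> lam * K"
    proof -
      have "\<forall>\<^sub>F lam in at_right (0::real). 0 < lam" by (rule eventually_at_right_less)
      then show ?thesis by (rule eventually_mono) (use bd in simp)
    qed
    have "((\<lambda>lam::real. lam * K) \<longlongrightarrow> 0 * K) (at_right 0)"
      by (intro tendsto_intros)
    then show "((\<lambda>lam::real. lam * K) \<longlongrightarrow> 0) (at_right 0)" by simp
  qed
  then have "((\<lambda>lam. (Hmat t n lam $$ (i,j) - 1\<^sub>m (n+1) $$ (i,j)) + 1\<^sub>m (n+1) $$ (i,j)) \<longlongrightarrow> 0 + 1\<^sub>m (n+1) $$ (i,j)) (at_right 0)"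
    by (intro tendsto_intros)
  then show ?thesis by simp
qed

end


lemma mat_vec_zero: "(A :: real mat) \<in> carrier_mat a b \<Longrightarrow> A *\<^sub>v 0\<^sub>v b = 0\<^sub>v a"
  by (intro eq_vecI) auto

context knots
begin

abbreviation "Lm \<equiv> Lmat t n"
abbreviation "Lt \<equiv> transpose_mat (Lmat t n)"

lemma L_carrier: "Lm \<in> carrier_mat (n+1) 2" unfolding Lmat_def by simp
lemma Lt_carrier: "Lt \<in> carrier_mat 2 (n+1)" using L_carrier by simp

lemma Lt_mvc: "v \<in> carrier_vec (n+1) \<Longrightarrow> Lt *\<^sub>v v \<in> carrier_vec 2"
  by (rule mult_mat_vec_carrier[OF Lt_carrier])
lemma L_mvc: "z \<in> carrier_vec 2 \<Longrightarrow> Lm *\<^sub>v z \<in> carrier_vec (n+1)"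
  by (rule mult_mat_vec_carrier[OF L_carrier])
lemma D_mvc: "v \<in> carrier_vec (n+1) \<Longrightarrow> Csub t n *\<^sub>v v \<in> carrier_vec (n+1)"
  by (rule mult_mat_vec_carrier[OF Csub_carrier])
lemmas mvcs[simp] = Lt_mvc L_mvc D_mvc Lt_mvc[simplified] L_mvc[simplified] D_mvc[simplified]

lemma L_mv: "z \<in> carrier_vec 2 \<Longrightarrow> i < n+1 \<Longrightarrow> (Lm *\<^sub>v z) $ i = z $ 0 + z $ 1 * t (Suc i)"
proof -
  assume z: "z \<in> carrier_vec 2" and i: "i < n+1"
  have e: "{0..<2::nat} = {0,1}" by auto
  have "(Lm *\<^sub>v z) $ i = (\<Sum>j\<in>{0..<2}. Lm $$ (i,j) * z $ j)"
    using z i L_carrier by (simp add: scalar_prod_def)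
  also have "\<dots> = z $ 0 + z $ 1 * t (Suc i)" unfolding e using i by (simp add: Lmat_def)
  finally show ?thesis .
qed

lemma lin_L:
  assumes p: "p \<in> carrier_vec (n+1)" and l: "\<forall>i<n+1. p $ i = a + b * t (Suc i)"
  shows "p = Lm *\<^sub>v vec 2 (\<lambda>j. if j = 0 then a else b)"
proof (rule eq_vecI)
  fix i assume "i < dim_vec (Lm *\<^sub>v vec 2 (\<lambda>j. if j = 0 then a else b))"
  then have i: "i < n+1" using L_carrier by simp
  show "p $ i = (Lm *\<^sub>v vec 2 (\<lambda>j. if j = 0 then a else b)) $ i"
    using L_mv[of "vec 2 (\<lambda>j. if j = 0 then a else b)" i] i l by simp
qed (use p L_carrier in simp)

lemma L_lin: "z \<in> carrier_vec 2 \<Longrightarrow> \<forall>i<n+1. (Lm *\<^sub>v z) $ i = z $ 0 + z $ 1 * t (Suc i)"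
  using L_mv by blast

lemma LtL_carrier: "Lt * Lm \<in> carrier_mat 2 2"
  using L_carrier Lt_carrier by simp

lemma LtL_sp: "v \<in> carrier_vec 2 \<Longrightarrow> scalar_prod v ((Lt * Lm) *\<^sub>v v) = scalar_prod (Lm *\<^sub>v v) (Lm *\<^sub>v v)"
proof -
  assume v: "v \<in> carrier_vec 2"
  have "(Lt * Lm) *\<^sub>v v = Lt *\<^sub>v (Lm *\<^sub>v v)" by (rule assoc_mult_mat_vec[OF Lt_carrier L_carrier v])
  then have "scalar_prod v ((Lt * Lm) *\<^sub>v v) = scalar_prod (Lt *\<^sub>v (Lm *\<^sub>v v)) v"
    using v L_carrier by (simp add: comm_scalar_prod[of _ 2])
  also have "\<dots> = scalar_prod (Lm *\<^sub>v v) (Lm *\<^sub>v v)"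
    by (rule transpose_vec_mult_scalar[OF L_carrier v]) (use v L_carrier in simp)
  finally show ?thesis .
qed

lemma Q_ex: "\<exists>Q. mat_inverse (Lt * Lm) = Some Q \<and> (Lt * Lm) * Q = 1\<^sub>m 2 \<and> Q * (Lt * Lm) = 1\<^sub>m 2 \<and> Q \<in> carrier_mat 2 2"
proof (rule inv_exists[OF LtL_carrier], intro ballI impI)
  fix v :: "real vec" assume v: "v \<in> carrier_vec 2" and z: "(Lt * Lm) *\<^sub>v v = 0\<^sub>v 2"
  have "scalar_prod (Lm *\<^sub>v v) (Lm *\<^sub>v v) = 0" using LtL_sp[OF v] z v by simp
  then have Lz: "Lm *\<^sub>v v = 0\<^sub>v (n+1)" by (rule sp_self_zero[OF L_mvc[OF v]])
  have e0: "v $ 0 + v $ 1 * t (Suc 0) = 0" using L_mv[OF v, of 0] Lz by simp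
  have e1: "v $ 0 + v $ 1 * t (Suc 1) = 0" using L_mv[OF v, of 1] Lz n1 by simp
  have "t (Suc 0) < t (Suc 1)" using tmono n1 by auto
  then have "v $ 1 = 0" using e0 e1
    by (metis add_left_cancel mult_cancel_left less_irrefl)
  then have "v $ 0 = 0" using e0 by simp
  show "v = 0\<^sub>v 2"
  proof (rule eq_vecI)
    fix i assume "i < dim_vec (0\<^sub>v 2 :: real vec)"
    then have "i = 0 \<or> i = 1" by auto
    then show "v $ i = 0\<^sub>v 2 $ i" using \<open>v $ 0 = 0\<close> \<open>v $ 1 = 0\<close> by auto
  qed (use v in simp)
qed

definition Qm :: "real mat" where "Qm = the (mat_inverse (Lt * Lm))"

lemma Q_props: "(Lt * Lm) * Qm = 1\<^sub>m 2" "Qm * (Lt * Lm) = 1\<^sub>m 2" "Qm \<in> carrier_mat 2 2"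
  using Q_ex unfolding Qm_def by auto

lemma Q_mvc[simp]: "z \<in> carrier_vec 2 \<Longrightarrow> Qm *\<^sub>v z \<in> carrier_vec 2"
  by (rule mult_mat_vec_carrier[OF Q_props(3)])

definition Pv :: "real vec \<Rightarrow> real vec" where "Pv y = (Lm * Qm * Lt) *\<^sub>v y"

lemma Pv_eq: "y \<in> carrier_vec (n+1) \<Longrightarrow> Pv y = Lm *\<^sub>v (Qm *\<^sub>v (Lt *\<^sub>v y))"
proof -
  assume y: "y \<in> carrier_vec (n+1)"
  have LQ: "Lm * Qm \<in> carrier_mat (n+1) 2" using L_carrier Q_props(3) by simp
  have "Pv y = (Lm * Qm) *\<^sub>v (Lt *\<^sub>v y)"
    unfolding Pv_def by (rule assoc_mult_mat_vec[OF LQ Lt_carrier y])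
  also have "\<dots> = Lm *\<^sub>v (Qm *\<^sub>v (Lt *\<^sub>v y))"
    by (rule assoc_mult_mat_vec[OF L_carrier Q_props(3) Lt_mvc[OF y]])
  finally show ?thesis .
qed

lemma Pv_carrier: "y \<in> carrier_vec (n+1) \<Longrightarrow> Pv y \<in> carrier_vec (n+1)"
  using Pv_eq[of y] L_mvc Q_mvc Lt_mvc by simp

lemma Lt_Lw: "w \<in> carrier_vec 2 \<Longrightarrow> Lt *\<^sub>v (Lm *\<^sub>v (Qm *\<^sub>v w)) = w"
proof -
  assume w: "w \<in> carrier_vec 2"
  have "Lt *\<^sub>v (Lm *\<^sub>v (Qm *\<^sub>v w)) = (Lt * Lm) *\<^sub>v (Qm *\<^sub>v w)"
    by (rule assoc_mult_mat_vec[symmetric, OF Lt_carrier L_carrier Q_mvc[OF w]])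
  also have "\<dots> = ((Lt * Lm) * Qm) *\<^sub>v w"
    by (rule assoc_mult_mat_vec[symmetric, OF LtL_carrier Q_props(3) w])
  finally show ?thesis using Q_props(1) w by simp
qed

lemma Lt_Pv: "y \<in> carrier_vec (n+1) \<Longrightarrow> Lt *\<^sub>v Pv y = Lt *\<^sub>v y"
  using Pv_eq Lt_Lw Lt_carrier by simp

lemma Pv_L: "z \<in> carrier_vec 2 \<Longrightarrow> Pv (Lm *\<^sub>v z) = Lm *\<^sub>v z"
proof -
  assume z: "z \<in> carrier_vec 2"
  have "Qm *\<^sub>v (Lt *\<^sub>v (Lm *\<^sub>v z)) = Qm *\<^sub>v ((Lt * Lm) *\<^sub>v z)"
    using assoc_mult_mat_vec[OF Lt_carrier L_carrier z] by simp
  also have "\<dots> = (Qm * (Lt * Lm)) *\<^sub>v z"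
    by (rule assoc_mult_mat_vec[symmetric, OF Q_props(3) LtL_carrier z])
  finally have "Qm *\<^sub>v (Lt *\<^sub>v (Lm *\<^sub>v z)) = (Qm * (Lt * Lm)) *\<^sub>v z" .
  then have "Qm *\<^sub>v (Lt *\<^sub>v (Lm *\<^sub>v z)) = z" using Q_props(2) z by simp
  then show ?thesis using Pv_eq z L_carrier by simp
qed

lemma Lt_sp: "u \<in> carrier_vec (n+1) \<Longrightarrow> z \<in> carrier_vec 2 \<Longrightarrow>
   scalar_prod u (Lm *\<^sub>v z) = scalar_prod (Lt *\<^sub>v u) z"
  using transpose_vec_mult_scalar[OF L_carrier] by simp

lemma orth:
  assumes y: "y \<in> carrier_vec (n+1)" and z: "z \<in> carrier_vec 2"
  shows "scalar_prod (y - Pv y) (Lm *\<^sub>v z) = 0"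
proof -
  have "Lt *\<^sub>v (y - Pv y) = Lt *\<^sub>v y - Lt *\<^sub>v Pv y"
    by (rule mult_minus_distrib_mat_vec[OF Lt_carrier y Pv_carrier[OF y]])
  also have "\<dots> = 0\<^sub>v 2" using Lt_Pv[OF y] Lt_carrier y by simp
  finally have "Lt *\<^sub>v (y - Pv y) = 0\<^sub>v 2" .
  then show ?thesis using Lt_sp[of "y - Pv y" z] y z Pv_carrier[OF y] by simp
qed

lemma Pv_lin: "y \<in> carrier_vec (n+1) \<Longrightarrow> \<exists>z\<in>carrier_vec 2. Pv y = Lm *\<^sub>v z"
  using Pv_eq Q_props(3) Lt_carrier by (intro bexI[of _ "Qm *\<^sub>v (Lt *\<^sub>v y)"]) auto

lemma range_D:
  assumes r: "r \<in> carrier_vec (n+1)" and Lr: "Lt *\<^sub>v r = 0\<^sub>v 2"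
  shows "\<exists>s\<in>carrier_vec (n+1). Csub t n *\<^sub>v s = r"
proof -
  define E where "E = Csub t n + Lm * Qm * Lt"
  have Ec: "E \<in> carrier_mat (n+1) (n+1)" unfolding E_def using Csub_carrier L_carrier Lt_carrier Q_props(3) by simp
  have Ev: "E *\<^sub>v v = Csub t n *\<^sub>v v + Pv v" if v: "v \<in> carrier_vec (n+1)" for v
    unfolding E_def Pv_def
    by (rule add_mult_distrib_mat_vec[of _ "n+1" "n+1"]) (use Csub_carrier L_carrier Lt_carrier Q_props(3) v in simp_all)
  have inj: "\<forall>v\<in>carrier_vec (n+1). E *\<^sub>v v = 0\<^sub>v (n+1) \<longrightarrow> v = 0\<^sub>v (n+1)"
  proof (intro ballI impI)
    fix v :: "real vec" assume v: "v \<in> carrier_vec (n+1)" and z: "E *\<^sub>v v = 0\<^sub>v (n+1)"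
    define w where "w = Qm *\<^sub>v (Lt *\<^sub>v v)"
    have w: "w \<in> carrier_vec 2" unfolding w_def using v by simp
    have Pw: "Pv v = Lm *\<^sub>v w" unfolding w_def using Pv_eq[OF v] .
    have "scalar_prod v (Pv v) = scalar_prod (Lt *\<^sub>v v) w" using Pw Lt_sp[OF v w] by simp
    also have "\<dots> = scalar_prod (Lt *\<^sub>v (Pv v)) w" using Lt_Pv[OF v] by simp
    also have "\<dots> = scalar_prod (Pv v) (Pv v)" using Pw Lt_sp[OF _ w, of "Pv v"] Pv_carrier[OF v] by simp
    finally have vPv: "scalar_prod v (Pv v) = scalar_prod (Pv v) (Pv v)" .
    have "0 = scalar_prod v (E *\<^sub>v v)" using z v by simp
    also have "\<dots> = scalar_prod v (Csub t n *\<^sub>v v) + scalar_prod v (Pv v)"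
      using Ev[OF v] v Csub_carrier Pv_carrier[OF v] by (simp add: scalar_prod_add_distrib[of _ "n+1"])
    finally have sum0: "scalar_prod v (Csub t n *\<^sub>v v) + scalar_prod (Pv v) (Pv v) = 0" using vPv by simp
    have n1: "scalar_prod v (Csub t n *\<^sub>v v) \<ge> 0" by (rule Csub_psd[OF v])
    have n2: "scalar_prod (Pv v) (Pv v) \<ge> 0" by (rule sp_self_nonneg[OF Pv_carrier[OF v]])
    have d0: "scalar_prod v (Csub t n *\<^sub>v v) = 0" and p0: "scalar_prod (Pv v) (Pv v) = 0"
      using sum0 n1 n2 by linarith+
    have Pv0: "Pv v = 0\<^sub>v (n+1)" by (rule sp_self_zero[OF Pv_carrier[OF v] p0])
    obtain a b where ab: "\<forall>i<n+1. v $ i = a + b * t (Suc i)" using Csub_zero[OF v d0] by blast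
    have "v = Lm *\<^sub>v vec 2 (\<lambda>j. if j = 0 then a else b)" by (rule lin_L[OF v ab])
    then have "Pv v = v" using Pv_L[of "vec 2 (\<lambda>j. if j = 0 then a else b)"] by simp
    then show "v = 0\<^sub>v (n+1)" using Pv0 by simp
  qed
  obtain B where B: "E * B = 1\<^sub>m (n+1)" "B \<in> carrier_mat (n+1) (n+1)"
    using inv_exists[OF Ec inj] by blast
  define s where "s = B *\<^sub>v r"
  have s: "s \<in> carrier_vec (n+1)" unfolding s_def using B r by simp
  have "E *\<^sub>v s = (E * B) *\<^sub>v r" unfolding s_def by (rule assoc_mult_mat_vec[symmetric, OF Ec B(2) r])
  then have Es: "Csub t n *\<^sub>v s + Pv s = r" using B r Ev[OF s] by simp
  define u where "u = Lt *\<^sub>v (Csub t n *\<^sub>v s)"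
  have u: "u \<in> carrier_vec 2" unfolding u_def using s by simp
  have Ds: "Csub t n *\<^sub>v s \<in> carrier_vec (n+1)" using Csub_carrier s by simp
  have "scalar_prod u u = scalar_prod (Csub t n *\<^sub>v s) (Lm *\<^sub>v u)" unfolding u_def using Lt_sp[OF Ds u] u_def by simp
  also have "\<dots> = scalar_prod s (Csub t n *\<^sub>v (Lm *\<^sub>v u))"
    by (rule Csub_sym_sp[OF s]) (use L_carrier u in simp)
  also have "Csub t n *\<^sub>v (Lm *\<^sub>v u) = 0\<^sub>v (n+1)"
    by (rule Csub_lin[OF _ L_lin[OF u]]) (use L_carrier u in simp)
  finally have "scalar_prod u u = 0" using s by simp
  then have u0: "u = 0\<^sub>v 2" by (rule sp_self_zero[OF u])
  have "Lt *\<^sub>v r = Lt *\<^sub>v (Csub t n *\<^sub>v s) + Lt *\<^sub>v Pv s"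
    unfolding Es[symmetric] by (rule mult_add_distrib_mat_vec[OF Lt_carrier Ds Pv_carrier[OF s]])
  then have "Lt *\<^sub>v r = 0\<^sub>v 2 + Lt *\<^sub>v s" using u0 u_def Lt_Pv[OF s] by simp
  then have "Lt *\<^sub>v s = 0\<^sub>v 2" using Lr left_zero_vec[OF Lt_mvc[OF s]] by simp
  then have "Pv s = 0\<^sub>v (n+1)" using Pv_eq[OF s] Q_props(3) L_carrier by (simp add: mat_vec_zero)
  then have "Csub t n *\<^sub>v s = r" using Es Ds by simp
  then show ?thesis using s by blast
qed

end


lemma sp_sum: "(v :: real vec) \<in> carrier_vec m \<Longrightarrow> scalar_prod u v = (\<Sum>i<m. u $ i * v $ i)"
  by (simp add: scalar_prod_def atLeast0LessThan)

context knots
begin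

lemma Lt_r: "y \<in> carrier_vec (n+1) \<Longrightarrow> Lt *\<^sub>v (y - Pv y) = 0\<^sub>v 2"
proof -
  assume y: "y \<in> carrier_vec (n+1)"
  have "Lt *\<^sub>v (y - Pv y) = Lt *\<^sub>v y - Lt *\<^sub>v Pv y"
    by (rule mult_minus_distrib_mat_vec[OF Lt_carrier y Pv_carrier[OF y]])
  also have "\<dots> = 0\<^sub>v 2" using Lt_Pv[OF y] Lt_mvc[OF y] by simp
  finally show ?thesis .
qed

lemma part2_lim:
  assumes y: "y \<in> carrier_vec (n+1)" and i: "i < n+1"
  shows "((\<lambda>lam. (Hmat t n lam *\<^sub>v y) $ i) \<longlongrightarrow> Pv y $ i) at_top"
proof -
  define P where "P = Pv y"
  define r where "r = y - P"
  have Pc: "P \<in> carrier_vec (n+1)" unfolding P_def by (rule Pv_carrier[OF y])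
  have rc: "r \<in> carrier_vec (n+1)" unfolding r_def using y Pc by simp
  obtain s where s: "s \<in> carrier_vec (n+1)" and Ds: "Csub t n *\<^sub>v s = r"
    using range_D[OF rc] Lt_r[OF y] unfolding r_def P_def by blast
  obtain z where z: "z \<in> carrier_vec 2" and Pz: "P = Lm *\<^sub>v z" using Pv_lin[OF y] unfolding P_def by blast
  have DP: "Csub t n *\<^sub>v P = 0\<^sub>v (n+1)"
    unfolding Pz by (rule Csub_lin[OF L_mvc[OF z] L_lin[OF z]])
  define K where "K = \<bar>s $ i\<bar> + sqrt (scalar_prod s s)"
  have bd: "\<bar>(Hmat t n lam *\<^sub>v y) $ i - P $ i\<bar> \<le> K / lam" if lam: "lam > 0" for lam
  proof -
    let ?H = "Hmat t n lam"
    have Hc: "?H \<in> carrier_mat (n+1) (n+1)" and AH: "Am lam * ?H = 1\<^sub>m (n+1)"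
      and HA: "?H * Am lam = 1\<^sub>m (n+1)" using H_ex[of lam] lam by auto
    have "Am lam *\<^sub>v P = P + lam \<cdot>\<^sub>v 0\<^sub>v (n+1)" using Am_mv[OF Pc] DP by simp
    also have "\<dots> = P" using Pc by (intro eq_vecI) auto
    finally have AP: "Am lam *\<^sub>v P = P" .
    have "?H *\<^sub>v P = ?H *\<^sub>v (Am lam *\<^sub>v P)" using AP by simp
    also have "\<dots> = (?H * Am lam) *\<^sub>v P" by (rule assoc_mult_mat_vec[symmetric, OF Hc Am_carrier Pc])
    finally have HP: "?H *\<^sub>v P = P" using HA Pc by simp
    have "?H *\<^sub>v (Am lam *\<^sub>v s) = (?H * Am lam) *\<^sub>v s" by (rule assoc_mult_mat_vec[symmetric, OF Hc Am_carrier s])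
    then have "?H *\<^sub>v (Am lam *\<^sub>v s) = s" using HA s by simp
    moreover have "?H *\<^sub>v (Am lam *\<^sub>v s) = ?H *\<^sub>v s + lam \<cdot>\<^sub>v (?H *\<^sub>v r)"
      unfolding Am_mv[OF s] Ds
      by (subst mult_add_distrib_mat_vec[OF Hc s]) (use rc Hc mat_vec_smult[OF Hc rc] in simp_all)
    ultimately have "s = ?H *\<^sub>v s + lam \<cdot>\<^sub>v (?H *\<^sub>v r)" by simp
    then have "s $ i = (?H *\<^sub>v s + lam \<cdot>\<^sub>v (?H *\<^sub>v r)) $ i" by simp
    also have "\<dots> = (?H *\<^sub>v s) $ i + lam * (?H *\<^sub>v r) $ i" using i Hc by simp
    finally have "s $ i = (?H *\<^sub>v s) $ i + lam * (?H *\<^sub>v r) $ i" .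
    then have Hr: "(?H *\<^sub>v r) $ i = (s $ i - (?H *\<^sub>v s) $ i) / lam" using lam by (simp add: field_simps)
    have yPr: "y = P + r" unfolding r_def using y Pc by (intro eq_vecI) auto
    have "?H *\<^sub>v y = ?H *\<^sub>v P + ?H *\<^sub>v r" unfolding yPr by (rule mult_add_distrib_mat_vec[OF Hc Pc rc])
    then have "(?H *\<^sub>v y) $ i = P $ i + (?H *\<^sub>v r) $ i" using HP i Hc by simp
    then have "(?H *\<^sub>v y) $ i - P $ i = (s $ i - (?H *\<^sub>v s) $ i) / lam" using Hr by simp
    moreover have "\<bar>(?H *\<^sub>v s) $ i\<bar> \<le> sqrt (scalar_prod s s)"
      by (rule resolvent_entry[OF Am_carrier Hc AH Am_pos s i]) (use lam in simp)
    ultimately have "\<bar>(?H *\<^sub>v y) $ i - P $ i\<bar> = \<bar>s $ i - (?H *\<^sub>v s) $ i\<bar> / lam" using lam by simp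
    also have "\<dots> \<le> K / lam" unfolding K_def
      using \<open>\<bar>(?H *\<^sub>v s) $ i\<bar> \<le> sqrt (scalar_prod s s)\<close> lam
      by (intro divide_right_mono) auto
    finally show ?thesis .
  qed
  have "((\<lambda>lam. (Hmat t n lam *\<^sub>v y) $ i - P $ i) \<longlongrightarrow> 0) at_top"
  proof (rule Lim_null_comparison)
    have "\<forall>\<^sub>F lam in at_top. (0::real) < lam" by (rule eventually_gt_at_top)
    then show "\<forall>\<^sub>F lam in at_top. norm ((Hmat t n lam *\<^sub>v y) $ i - P $ i) \<le> K / lam"
      by (rule eventually_mono) (use bd in simp)
    show "((\<lambda>lam::real. K / lam) \<longlongrightarrow> 0) at_top"
      by (rule tendsto_divide_0[OF tendsto_const filterlim_at_top_imp_at_infinity[OF filterlim_ident]])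
  qed
  then have "((\<lambda>lam. ((Hmat t n lam *\<^sub>v y) $ i - P $ i) + P $ i) \<longlongrightarrow> 0 + P $ i) at_top"
    by (intro tendsto_intros)
  then show ?thesis unfolding P_def by simp
qed

lemma minimize:
  assumes y: "y \<in> carrier_vec (n+1)" and p: "p \<in> carrier_vec (n+1)"
    and C: "Cmat t n *\<^sub>v wvec n u1 p u2 = 0\<^sub>v (n+3)"
  shows "scalar_prod (y - Pv y) (y - Pv y) \<le> scalar_prod (y - p) (y - p) \<and>
     (scalar_prod (y - p) (y - p) \<le> scalar_prod (y - Pv y) (y - Pv y) \<longrightarrow> u1 = 0 \<and> u2 = 0 \<and> p = Pv y)"
proof -
  define P where "P = Pv y"
  have Pc: "P \<in> carrier_vec (n+1)" unfolding P_def by (rule Pv_carrier[OF y])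
  obtain a b where u: "u1 = 0" "u2 = 0" and ab: "\<forall>i<n+1. p $ i = a + b * t (Suc i)"
    using Cmat_zero[OF p C] by blast
  define z' where "z' = vec 2 (\<lambda>j. if j = 0 then a else b)"
  have z': "z' \<in> carrier_vec 2" unfolding z'_def by simp
  have pL: "p = Lm *\<^sub>v z'" unfolding z'_def by (rule lin_L[OF p ab])
  obtain z where z: "z \<in> carrier_vec 2" and Pz: "P = Lm *\<^sub>v z" using Pv_lin[OF y] unfolding P_def by blast
  have o1: "scalar_prod (y - P) P = 0" using orth[OF y z] Pz unfolding P_def by simp
  have o2: "scalar_prod (y - P) p = 0" using orth[OF y z'] pL unfolding P_def by simp
  define f where "f i = y $ i - P $ i" for i
  define g where "g i = P $ i - p $ i" for i
  have cross: "(\<Sum>i<n+1. f i * g i) = 0"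
  proof -
    have "(\<Sum>i<n+1. f i * g i) = (\<Sum>i<n+1. (y - P) $ i * P $ i) - (\<Sum>i<n+1. (y - P) $ i * p $ i)"
      unfolding f_def g_def sum_subtractf[symmetric]
      by (rule sum.cong) (use y Pc p in \<open>auto simp: algebra_simps\<close>)
    also have "\<dots> = 0" using o1 o2 sp_sum[OF Pc, of "y - P"] sp_sum[OF p, of "y - P"] by simp
    finally show ?thesis .
  qed
  have e1: "scalar_prod (y - P) (y - P) = (\<Sum>i<n+1. (f i)^2)"
    using sp_self[of "y - P" "n+1"] y Pc unfolding f_def by simp
  have e2: "scalar_prod (y - p) (y - p) = (\<Sum>i<n+1. (f i + g i)^2)"
    using sp_self[of "y - p" "n+1"] y p unfolding f_def g_def by simp
  have "(\<Sum>i<n+1. (f i + g i)^2) = (\<Sum>i<n+1. (f i)^2) + 2 * (\<Sum>i<n+1. f i * g i) + (\<Sum>i<n+1. (g i)^2)"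
    by (simp add: power2_sum sum.distrib sum_distrib_left mult.assoc)
  then have e3: "scalar_prod (y - p) (y - p) = scalar_prod (y - P) (y - P) + (\<Sum>i<n+1. (g i)^2)"
    using e1 e2 cross by simp
  have gpos: "(\<Sum>i<n+1. (g i)^2) \<ge> 0" by (rule sum_nonneg) simp
  have "scalar_prod (y - p) (y - p) \<le> scalar_prod (y - P) (y - P) \<longrightarrow> p = P"
  proof
    assume "scalar_prod (y - p) (y - p) \<le> scalar_prod (y - P) (y - P)"
    then have "(\<Sum>i<n+1. (g i)^2) = 0" using e3 gpos by simp
    then have "\<forall>i\<in>{..<n+1}. (g i)^2 = 0" by (subst (asm) sum_nonneg_eq_0_iff) auto
    then show "p = P" using p Pc unfolding g_def by (intro eq_vecI) auto
  qed
  then show ?thesis using e3 gpos u unfolding P_def by simp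
qed

end


theorem corollary1:
  fixes t :: "nat \<Rightarrow> real" and n :: nat
  assumes n1: "n \<ge> 1"
    and tmono: "\<forall>i\<in>{1..n}. t i < t (Suc i)"
  shows
    "(\<forall>i < n+1. \<forall>j < n+1.
        ((\<lambda>lam. Hmat t n lam $$ (i,j)) \<longlongrightarrow> 1\<^sub>m (n+1) $$ (i,j)) (at_right 0))
     \<and>
     (\<forall>y \<in> carrier_vec (n+1).
        let L = Lmat t n;
            P = (L * the (mat_inverse (transpose_mat L * L)) * transpose_mat L) *\<^sub>v y
        in (\<forall>i < n+1. ((\<lambda>lam. (Hmat t n lam *\<^sub>v y) $ i) \<longlongrightarrow> P $ i) at_top)
         \<and> (\<exists>z \<in> carrier_vec 2. P = L *\<^sub>v z)
         \<and> (\<forall>z \<in> carrier_vec 2. scalar_prod (y - P) (L *\<^sub>v z) = 0)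
         \<and> Cmat t n *\<^sub>v wvec n 0 P 0 = 0\<^sub>v (n+3)
         \<and> (\<forall>u1 u2. \<forall>p \<in> carrier_vec (n+1).
              Cmat t n *\<^sub>v wvec n u1 p u2 = 0\<^sub>v (n+3) \<longrightarrow>
              scalar_prod (y - P) (y - P) \<le> scalar_prod (y - p) (y - p)
              \<and> (scalar_prod (y - p) (y - p) \<le> scalar_prod (y - P) (y - P)
                   \<longrightarrow> u1 = 0 \<and> u2 = 0 \<and> p = P)))"
proof -
  interpret knots t n using n1 tmono by unfold_locales
  have Peq: "(Lmat t n * the (mat_inverse (transpose_mat (Lmat t n) * Lmat t n)) * transpose_mat (Lmat t n)) *\<^sub>v y = Pv y" for y
    unfolding Pv_def Qm_def ..
  have P1: "\<forall>i < n+1. \<forall>j < n+1.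
        ((\<lambda>lam. Hmat t n lam $$ (i,j)) \<longlongrightarrow> 1\<^sub>m (n+1) $$ (i,j)) (at_right 0)"
    using part1 by blast
  have P2: "let L = Lmat t n;
            P = (L * the (mat_inverse (transpose_mat L * L)) * transpose_mat L) *\<^sub>v y
        in (\<forall>i < n+1. ((\<lambda>lam. (Hmat t n lam *\<^sub>v y) $ i) \<longlongrightarrow> P $ i) at_top)
         \<and> (\<exists>z \<in> carrier_vec 2. P = L *\<^sub>v z)
         \<and> (\<forall>z \<in> carrier_vec 2. scalar_prod (y - P) (L *\<^sub>v z) = 0)
         \<and> Cmat t n *\<^sub>v wvec n 0 P 0 = 0\<^sub>v (n+3)
         \<and> (\<forall>u1 u2. \<forall>p \<in> carrier_vec (n+1).
              Cmat t n *\<^sub>v wvec n u1 p u2 = 0\<^sub>v (n+3) \<longrightarrow>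
              scalar_prod (y - P) (y - P) \<le> scalar_prod (y - p) (y - p)
              \<and> (scalar_prod (y - p) (y - p) \<le> scalar_prod (y - P) (y - P)
                   \<longrightarrow> u1 = 0 \<and> u2 = 0 \<and> p = P))"
    if y: "y \<in> carrier_vec (n+1)" for y
  proof -
    have A: "\<forall>i<n+1. ((\<lambda>lam. (Hmat t n lam *\<^sub>v y) $ i) \<longlongrightarrow> Pv y $ i) at_top"
      using part2_lim[OF y] by blast
    have B: "\<exists>z\<in>carrier_vec 2. Pv y = Lmat t n *\<^sub>v z" by (rule Pv_lin[OF y])
    have C: "\<forall>z\<in>carrier_vec 2. scalar_prod (y - Pv y) (Lmat t n *\<^sub>v z) = 0" using orth[OF y] by blast
    obtain z where z: "z \<in> carrier_vec 2" and Pz: "Pv y = Lmat t n *\<^sub>v z" using B by blast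
    have lz: "\<forall>i<n+1. Pv y $ i = z $ 0 + z $ 1 * t (Suc i)" using L_lin[OF z] Pz by simp
    have D: "Cmat t n *\<^sub>v wvec n 0 (Pv y) 0 = 0\<^sub>v (n+3)"
      by (rule Cmat_lin[OF Pv_carrier[OF y] lz])
    have E: "\<forall>u1 u2. \<forall>p \<in> carrier_vec (n+1).
              Cmat t n *\<^sub>v wvec n u1 p u2 = 0\<^sub>v (n+3) \<longrightarrow>
              scalar_prod (y - Pv y) (y - Pv y) \<le> scalar_prod (y - p) (y - p)
              \<and> (scalar_prod (y - p) (y - p) \<le> scalar_prod (y - Pv y) (y - Pv y)
                   \<longrightarrow> u1 = 0 \<and> u2 = 0 \<and> p = Pv y)"
      using minimize[OF y] by blast
    show ?thesis unfolding Let_def Peq using A B C D E by blast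
  qed
  show ?thesis using P1 P2 by blast
qed



end
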